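(* Let $S$ be an $L$-theory extending $I\Sigma_1$ such that for some $K\in\mathbb{N}$, $S$ proves: for all pairwise coprime $a,b,c$ with $a+b=c$ one has $c<K\,\mathrm{rad}(abc)^{1+1/3}$; and $S$ proves that the only $x,y,a,b>1$ with $x^a-y^b=1$ are $x=3,a=2,y=2,b=3$. Let $\langle \mathcal{B}, e\rangle$ be any model of $S + \mathrm{Exp}'$, with $\mathcal{A}$ a substructure of $\mathcal{B}$ satisfying $\mathrm{Pr}$ such that $e: B\times A\to B$. Then Catalan's conjecture for $e$ holds in $\langle \mathcal{B}, e\rangle$: if $x,y\in B$, $a,b\in A$, $x,y,a,b>1$ and $e(x,a)-e(y,b)=1$, then $x=3$, $a=2$, $y=2$, $b=3$.
   Context: $L = \langle 0,1,+,\cdot,\le\rangle$; $x^y$ denotes the exponential $\Delta_1$-definable in $I\Sigma_1$; $\mathrm{rad}(a)$ is the product of the distinct primes dividing $a$. Presburger arithmetic $\mathrm{Pr}$: $0 \ne z+1$; $x\neq 0 \to \exists z\,(x = z+1)$; $x+z=y+z\to x=y$; $x+0=x$; associativity and commutativity of $+$; $x\le y \leftrightarrow \exists z\,(x+z=y)$; for each standard $0<n$, $\exists y\,(ny \le x < n(y+1))$. $\mathrm{Exp}'$ consists of: (e0) there is an $L$-substructure $\mathcal{A}$ of $\mathcal{B}$ satisfying $\mathrm{Pr}$ with $e: B\times A\to B$; and for all $x\in B$, $y,z\in A$: (e1) $(x=1\vee y=0)\leftrightarrow e(x,y)=1$; (e2) $x\neq0\to e(x,y)\neq 0$; (e3)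 $e(x,1)=x$; (e4) $e(x,y+z)=e(x,y)e(x,z)$. *)

theory Defs
  imports Main
begin

section \<open>L-structures (L = 0,1,+,*,<=) on a carrier set\<close>

record 'b lstr =
  car :: "'b set"
  zer :: 'b
  one :: 'b
  pl  :: "'b \<Rightarrow> 'b \<Rightarrow> 'b"
  tm  :: "'b \<Rightarrow> 'b \<Rightarrow> 'b"
  lq  :: "'b \<Rightarrow> 'b \<Rightarrow> bool"

definition lstructure :: "'b lstr \<Rightarrow> bool" where
  "lstructure M \<longleftrightarrow> zer M \<in> car M \<and> one M \<in> car M \<and>
     (\<forall>x\<in>car M. \<forall>y\<in>car M. pl M x y \<in> car M \<and> tm M x y \<in> car M)"

definition lt :: "'b lstr \<Rightarrow> 'b \<Rightarrow> 'b \<Rightarrow> bool" where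
  "lt M x y \<longleftrightarrow> lq M x y \<and> x \<noteq> y"

fun num :: "'b lstr \<Rightarrow> nat \<Rightarrow> 'b" where
  "num M 0 = zer M"
| "num M (Suc 0) = one M"
| "num M (Suc (Suc n)) = pl M (num M (Suc n)) (one M)"

fun nsm :: "'b lstr \<Rightarrow> nat \<Rightarrow> 'b \<Rightarrow> 'b" where
  "nsm M 0 y = zer M"
| "nsm M (Suc 0) y = y"
| "nsm M (Suc (Suc n)) y = pl M (nsm M (Suc n) y) y"

datatype trm = V nat | Zt | Ot | Pt trm trm | Tt trm trm

datatype fm = Eqf trm trm | Lef trm trm | Negf fm | Conjf fm fm | Disjf fm fm
  | Impf fm fm | Exf nat fm | Allf nat fm

fun tvars :: "trm \<Rightarrow> nat set" where
  "tvars (V n) = {n}" | "tvars Zt = {}" | "tvars Ot = {}"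
| "tvars (Pt s t) = tvars s \<union> tvars t" | "tvars (Tt s t) = tvars s \<union> tvars t"

fun fvars :: "fm \<Rightarrow> nat set" where
  "fvars (Eqf s t) = tvars s \<union> tvars t"
| "fvars (Lef s t) = tvars s \<union> tvars t"
| "fvars (Negf p) = fvars p"
| "fvars (Conjf p q) = fvars p \<union> fvars q"
| "fvars (Disjf p q) = fvars p \<union> fvars q"
| "fvars (Impf p q) = fvars p \<union> fvars q"
| "fvars (Exf x p) = fvars p - {x}"
| "fvars (Allf x p) = fvars p - {x}"

definition sentence :: "fm \<Rightarrow> bool" where
  "sentence p \<longleftrightarrow> fvars p = {}"

fun ev :: "'b lstr \<Rightarrow> (nat \<Rightarrow> 'b) \<Rightarrow> trm \<Rightarrow> 'b" where
  "ev M r (V n) = r n" | "ev M r Zt = zer M" | "ev M r Ot = one M"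
| "ev M r (Pt s t) = pl M (ev M r s) (ev M r t)"
| "ev M r (Tt s t) = tm M (ev M r s) (ev M r t)"

fun sat :: "'b lstr \<Rightarrow> (nat \<Rightarrow> 'b) \<Rightarrow> fm \<Rightarrow> bool" where
  "sat M r (Eqf s t) = (ev M r s = ev M r t)"
| "sat M r (Lef s t) = lq M (ev M r s) (ev M r t)"
| "sat M r (Negf p) = (\<not> sat M r p)"
| "sat M r (Conjf p q) = (sat M r p \<and> sat M r q)"
| "sat M r (Disjf p q) = (sat M r p \<or> sat M r q)"
| "sat M r (Impf p q) = (sat M r p \<longrightarrow> sat M r q)"
| "sat M r (Exf x p) = (\<exists>a\<in>car M. sat M (r(x := a)) p)"
| "sat M r (Allf x p) = (\<forall>a\<in>car M. sat M (r(x := a)) p)"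

inductive delta0 :: "fm \<Rightarrow> bool" where
  "delta0 (Eqf s t)"
| "delta0 (Lef s t)"
| "delta0 p \<Longrightarrow> delta0 (Negf p)"
| "delta0 p \<Longrightarrow> delta0 q \<Longrightarrow> delta0 (Conjf p q)"
| "delta0 p \<Longrightarrow> delta0 q \<Longrightarrow> delta0 (Disjf p q)"
| "delta0 p \<Longrightarrow> delta0 q \<Longrightarrow> delta0 (Impf p q)"
| "x \<notin> tvars t \<Longrightarrow> delta0 p \<Longrightarrow> delta0 (Exf x (Conjf (Lef (V x) t) p))"
| "x \<notin> tvars t \<Longrightarrow> delta0 p \<Longrightarrow> delta0 (Allf x (Impf (Lef (V x) t) p))"

inductive sigma1 :: "fm \<Rightarrow> bool" where
  "delta0 p \<Longrightarrow> sigma1 p"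
| "sigma1 p \<Longrightarrow> sigma1 (Exf x p)"

definition pa_minus :: "'b lstr \<Rightarrow> bool" where
  "pa_minus M \<longleftrightarrow> (let C = car M; p = pl M; t = tm M; z = zer M; u = one M in
     (\<forall>x\<in>C. \<forall>y\<in>C. \<forall>w\<in>C. p x (p y w) = p (p x y) w) \<and>
     (\<forall>x\<in>C. \<forall>y\<in>C. p x y = p y x) \<and>
     (\<forall>x\<in>C. \<forall>y\<in>C. \<forall>w\<in>C. t x (t y w) = t (t x y) w) \<and>
     (\<forall>x\<in>C. \<forall>y\<in>C. t x y = t y x) \<and>
     (\<forall>x\<in>C. \<forall>y\<in>C. \<forall>w\<in>C. t x (p y w) = p (t x y) (t x w)) \<and>
     (\<forall>x\<in>C. p x z = x \<and> t x z = z) \<and>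
     (\<forall>x\<in>C. t x u = x) \<and>
     (\<forall>x\<in>C. lq M x x) \<and>
     (\<forall>x\<in>C. \<forall>y\<in>C. \<forall>w\<in>C. lt M x y \<and> lt M y w \<longrightarrow> lt M x w) \<and>
     (\<forall>x\<in>C. \<forall>y\<in>C. lt M x y \<or> x = y \<or> lt M y x) \<and>
     (\<forall>x\<in>C. \<forall>y\<in>C. \<forall>w\<in>C. lt M x y \<longrightarrow> lt M (p x w) (p y w)) \<and>
     (\<forall>x\<in>C. \<forall>y\<in>C. \<forall>w\<in>C. lt M z w \<and> lt M x y \<longrightarrow> lt M (t x w) (t y w)) \<and>
     (\<forall>x\<in>C. \<forall>y\<in>C. lt M x y \<longrightarrow> (\<exists>w\<in>C. p x w = y)) \<and>
     lt M z u \<and>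
     (\<forall>x\<in>C. lt M z x \<longrightarrow> lq M u x) \<and>
     (\<forall>x\<in>C. lq M z x))"

definition induction_inst :: "'b lstr \<Rightarrow> fm \<Rightarrow> nat \<Rightarrow> bool" where
  "induction_inst M p x \<longleftrightarrow>
     (\<forall>r. range r \<subseteq> car M \<longrightarrow>
        sat M (r(x := zer M)) p \<and>
        (\<forall>a\<in>car M. sat M (r(x := a)) p \<longrightarrow> sat M (r(x := pl M a (one M))) p)
        \<longrightarrow> (\<forall>a\<in>car M. sat M (r(x := a)) p))"

definition model_ISigma1 :: "'b lstr \<Rightarrow> bool" where
  "model_ISigma1 M \<longleftrightarrow> lstructure M \<and> pa_minus M \<and>
     (\<forall>p x. sigma1 p \<longrightarrow> induction_inst M p x)"

definition models :: "fm set \<Rightarrow> 'b lstr \<Rightarrow> bool" where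
  "models S M \<longleftrightarrow> lstructure M \<and>
     (\<forall>p\<in>S. \<forall>r. range r \<subseteq> car M \<longrightarrow> sat M r p)"

section \<open>Arithmetic notions inside a structure (unfolded meaning of the defining formulas)\<close>

definition dvd_in :: "'b lstr \<Rightarrow> 'b \<Rightarrow> 'b \<Rightarrow> bool" where
  "dvd_in M d n \<longleftrightarrow> (\<exists>q\<in>car M. n = tm M d q)"

definition coprime_in :: "'b lstr \<Rightarrow> 'b \<Rightarrow> 'b \<Rightarrow> bool" where
  "coprime_in M a b \<longleftrightarrow> (\<forall>d\<in>car M. dvd_in M d a \<and> dvd_in M d b \<longrightarrow> d = one M)"

definition prime_in :: "'b lstr \<Rightarrow> 'b \<Rightarrow> bool" where
  "prime_in M p \<longleftrightarrow> lt M (one M) p \<and>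
     (\<forall>d\<in>car M. dvd_in M d p \<longrightarrow> d = one M \<or> d = p)"

text \<open>Goedel's beta function, relationally: beta(a,b,i) = a mod (1 + (i+1) b).\<close>
definition beta_in :: "'b lstr \<Rightarrow> 'b \<Rightarrow> 'b \<Rightarrow> 'b \<Rightarrow> 'b \<Rightarrow> bool" where
  "beta_in M a b i v \<longleftrightarrow>
     (let m = pl M (one M) (tm M (pl M i (one M)) b) in
       lt M v m \<and> (\<exists>q\<in>car M. a = pl M (tm M q m) v))"

text \<open>The Delta_1-definable exponential: z = x^y.\<close>
definition pow_in :: "'b lstr \<Rightarrow> 'b \<Rightarrow> 'b \<Rightarrow> 'b \<Rightarrow> bool" where
  "pow_in M x y z \<longleftrightarrow> (\<exists>a\<in>car M. \<exists>b\<in>car M.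
     beta_in M a b (zer M) (one M) \<and>
     (\<forall>i\<in>car M. lt M i y \<longrightarrow>
        (\<forall>u\<in>car M. beta_in M a b i u \<longrightarrow> beta_in M a b (pl M i (one M)) (tm M u x))) \<and>
     beta_in M a b y z)"

text \<open>r = rad(n): product of the distinct primes p <= n dividing n (coded iterated product).\<close>
definition rad_in :: "'b lstr \<Rightarrow> 'b \<Rightarrow> 'b \<Rightarrow> bool" where
  "rad_in M n r \<longleftrightarrow> (\<exists>a\<in>car M. \<exists>b\<in>car M.
     beta_in M a b (zer M) (one M) \<and>
     (\<forall>i\<in>car M. lt M i n \<longrightarrow>
        (\<forall>u\<in>car M. beta_in M a b i u \<longrightarrow>
           beta_in M a b (pl M i (one M))
             (if prime_in M (pl M i (one M)) \<and> dvd_in M (pl M i (one M)) n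
              then tm M u (pl M i (one M)) else u))) \<and>
     beta_in M a b n r)"

text \<open>abc sentence with constant K: c < K rad(abc)^(4/3), read as c^3 < K^3 rad(abc)^4.\<close>
definition abc_in :: "'b lstr \<Rightarrow> nat \<Rightarrow> bool" where
  "abc_in M K \<longleftrightarrow> (let k = num M K; t = tm M in
     \<forall>a\<in>car M. \<forall>b\<in>car M. \<forall>c\<in>car M. \<forall>r\<in>car M.
       lt M (zer M) a \<and> lt M (zer M) b \<and>
       coprime_in M a b \<and> coprime_in M b c \<and> coprime_in M a c \<and>
       pl M a b = c \<and> rad_in M (t (t a b) c) r \<longrightarrow>
       lt M (t (t c c) c) (t (t (t k k) k) (t (t r r) (t r r))))"

definition catalan_in :: "'b lstr \<Rightarrow> bool" where
  "catalan_in M \<longleftrightarrow>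
     (\<forall>x\<in>car M. \<forall>y\<in>car M. \<forall>a\<in>car M. \<forall>b\<in>car M. \<forall>u\<in>car M. \<forall>v\<in>car M.
        lt M (one M) x \<and> lt M (one M) y \<and> lt M (one M) a \<and> lt M (one M) b \<and>
        pow_in M x a u \<and> pow_in M y b v \<and> u = pl M v (one M) \<longrightarrow>
        x = num M 3 \<and> a = num M 2 \<and> y = num M 2 \<and> b = num M 3)"

definition presburger_sub :: "'b lstr \<Rightarrow> 'b set \<Rightarrow> bool" where
  "presburger_sub B A \<longleftrightarrow> A \<subseteq> car B \<and> zer B \<in> A \<and> one B \<in> A \<and>
     (\<forall>x\<in>A. \<forall>y\<in>A. pl B x y \<in> A \<and> tm B x y \<in> A) \<and>
     (\<forall>z\<in>A. zer B \<noteq> pl B z (one B)) \<and>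
     (\<forall>x\<in>A. x \<noteq> zer B \<longrightarrow> (\<exists>z\<in>A. x = pl B z (one B))) \<and>
     (\<forall>x\<in>A. \<forall>y\<in>A. \<forall>z\<in>A. pl B x z = pl B y z \<longrightarrow> x = y) \<and>
     (\<forall>x\<in>A. pl B x (zer B) = x) \<and>
     (\<forall>x\<in>A. \<forall>y\<in>A. \<forall>z\<in>A. pl B x (pl B y z) = pl B (pl B x y) z) \<and>
     (\<forall>x\<in>A. \<forall>y\<in>A. pl B x y = pl B y x) \<and>
     (\<forall>x\<in>A. \<forall>y\<in>A. lq B x y \<longleftrightarrow> (\<exists>z\<in>A. pl B x z = y)) \<and>
     (\<forall>n::nat. 0 < n \<longrightarrow> (\<forall>x\<in>A. \<exists>y\<in>A.
        lq B (nsm B n y) x \<and> lt B x (nsm B n (pl B y (one B)))))"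

definition exp_prime :: "'b lstr \<Rightarrow> 'b set \<Rightarrow> ('b \<Rightarrow> 'b \<Rightarrow> 'b) \<Rightarrow> bool" where
  "exp_prime B A e \<longleftrightarrow> presburger_sub B A \<and>
     (\<forall>x\<in>car B. \<forall>y\<in>A. e x y \<in> car B) \<and>
     (\<forall>x\<in>car B. \<forall>y\<in>A. (x = one B \<or> y = zer B) \<longleftrightarrow> e x y = one B) \<and>
     (\<forall>x\<in>car B. \<forall>y\<in>A. x \<noteq> zer B \<longrightarrow> e x y \<noteq> zer B) \<and>
     (\<forall>x\<in>car B. e x (one B) = x) \<and>
     (\<forall>x\<in>car B. \<forall>y\<in>A. \<forall>z\<in>A. e x (pl B y z) = tm B (e x y) (e x z))"

end

theory Submission
  imports Defs
begin


locale isig =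
  fixes M :: "'b lstr"
  assumes mI: "model_ISigma1 M"
begin

abbreviation C where "C \<equiv> car M"
abbreviation pls (infixl "\<oplus>" 65) where "x \<oplus> y \<equiv> pl M x y"
abbreviation tms (infixl "\<otimes>" 70) where "x \<otimes> y \<equiv> tm M x y"
abbreviation Z where "Z \<equiv> zer M"
abbreviation U where "U \<equiv> one M"
abbreviation le (infix "\<preceq>" 50) where "x \<preceq> y \<equiv> lq M x y"
abbreviation less (infix "\<prec>" 50) where "x \<prec> y \<equiv> lt M x y"

lemma lstr: "lstructure M" and pam: "pa_minus M" and ind: "sigma1 p \<Longrightarrow> induction_inst M p x"
  using mI unfolding model_ISigma1_def by auto

lemmas PA = pam[unfolded pa_minus_def Let_def]
lemmas PA0 = PA[THEN conjunct1]
lemmas PA1 = PA[THEN conjunct2, THEN conjunct1]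
lemmas PA2 = PA[THEN conjunct2, THEN conjunct2, THEN conjunct1]
lemmas PA3 = PA[THEN conjunct2, THEN conjunct2, THEN conjunct2, THEN conjunct1]
lemmas PA4 = PA[THEN conjunct2, THEN conjunct2, THEN conjunct2, THEN conjunct2, THEN conjunct1]
lemmas PA5 = PA[THEN conjunct2, THEN conjunct2, THEN conjunct2, THEN conjunct2, THEN conjunct2, THEN conjunct1]
lemmas PA6 = PA[THEN conjunct2, THEN conjunct2, THEN conjunct2, THEN conjunct2, THEN conjunct2, THEN conjunct2, THEN conjunct1]
lemmas PA7 = PA[THEN conjunct2, THEN conjunct2, THEN conjunct2, THEN conjunct2, THEN conjunct2, THEN conjunct2, THEN conjunct2, THEN conjunct1]
lemmas PA8 = PA[THEN conjunct2, THEN conjunct2, THEN conjunct2, THEN conjunct2, THEN conjunct2, THEN conjunct2, THEN conjunct2, THEN conjunct2, THEN conjunct1]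
lemmas PA9 = PA[THEN conjunct2, THEN conjunct2, THEN conjunct2, THEN conjunct2, THEN conjunct2, THEN conjunct2, THEN conjunct2, THEN conjunct2, THEN conjunct2, THEN conjunct1]
lemmas PA10 = PA[THEN conjunct2, THEN conjunct2, THEN conjunct2, THEN conjunct2, THEN conjunct2, THEN conjunct2, THEN conjunct2, THEN conjunct2, THEN conjunct2, THEN conjunct2, THEN conjunct1]
lemmas PA11 = PA[THEN conjunct2, THEN conjunct2, THEN conjunct2, THEN conjunct2, THEN conjunct2, THEN conjunct2, THEN conjunct2, THEN conjunct2, THEN conjunct2, THEN conjunct2, THEN conjunct2, THEN conjunct1]
lemmas PA12 = PA[THEN conjunct2, THEN conjunct2, THEN conjunct2, THEN conjunct2, THEN conjunct2, THEN conjunct2, THEN conjunct2, THEN conjunct2, THEN conjunct2, THEN conjunct2, THEN conjunct2, THEN conjunct2, THEN conjunct1]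
lemmas PA13 = PA[THEN conjunct2, THEN conjunct2, THEN conjunct2, THEN conjunct2, THEN conjunct2, THEN conjunct2, THEN conjunct2, THEN conjunct2, THEN conjunct2, THEN conjunct2, THEN conjunct2, THEN conjunct2, THEN conjunct2, THEN conjunct1]
lemmas PA14 = PA[THEN conjunct2, THEN conjunct2, THEN conjunct2, THEN conjunct2, THEN conjunct2, THEN conjunct2, THEN conjunct2, THEN conjunct2, THEN conjunct2, THEN conjunct2, THEN conjunct2, THEN conjunct2, THEN conjunct2, THEN conjunct2, THEN conjunct1]
lemmas PA15 = PA[THEN conjunct2, THEN conjunct2, THEN conjunct2, THEN conjunct2, THEN conjunct2, THEN conjunct2, THEN conjunct2, THEN conjunct2, THEN conjunct2, THEN conjunct2, THEN conjunct2, THEN conjunct2, THEN conjunct2, THEN conjunct2, THEN conjunct2]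

lemma Z_C[simp]: "Z \<in> C" and U_C[simp]: "U \<in> C"
  using lstr unfolding lstructure_def by auto
lemma pl_C[simp]: "x \<in> C \<Longrightarrow> y \<in> C \<Longrightarrow> x \<oplus> y \<in> C"
  and tm_C[simp]: "x \<in> C \<Longrightarrow> y \<in> C \<Longrightarrow> x \<otimes> y \<in> C"
  using lstr unfolding lstructure_def by auto

lemma add_assoc: "x \<in> C \<Longrightarrow> y \<in> C \<Longrightarrow> w \<in> C \<Longrightarrow> x \<oplus> y \<oplus> w = x \<oplus> (y \<oplus> w)"
  using PA0 by simp
lemma add_comm: "x \<in> C \<Longrightarrow> y \<in> C \<Longrightarrow> x \<oplus> y = y \<oplus> x"
  using PA1 by blast
lemma mul_assoc: "x \<in> C \<Longrightarrow> y \<in> C \<Longrightarrow> w \<in> C \<Longrightarrow> x \<otimes> y \<otimes> w = x \<otimes> (y \<otimes> w)"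
  using PA2 by simp
lemma mul_comm: "x \<in> C \<Longrightarrow> y \<in> C \<Longrightarrow> x \<otimes> y = y \<otimes> x"
  using PA3 by blast
lemma distL: "x \<in> C \<Longrightarrow> y \<in> C \<Longrightarrow> w \<in> C \<Longrightarrow> x \<otimes> (y \<oplus> w) = x \<otimes> y \<oplus> x \<otimes> w"
  using PA4 by blast
lemma add_0[simp]: "x \<in> C \<Longrightarrow> x \<oplus> Z = x" and mul_0[simp]: "x \<in> C \<Longrightarrow> x \<otimes> Z = Z"
  and mul_1[simp]: "x \<in> C \<Longrightarrow> x \<otimes> U = x"
  using PA5 PA6 by blast+
lemma le_refl[simp]: "x \<in> C \<Longrightarrow> x \<preceq> x"
  using PA7 by blast
lemma lt_trans: "x \<in> C \<Longrightarrow> y \<in> C \<Longrightarrow> w \<in> C \<Longrightarrow> x \<prec> y \<Longrightarrow> y \<prec> w \<Longrightarrow> x \<prec> w"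
  using PA8 by blast
lemma trich: "x \<in> C \<Longrightarrow> y \<in> C \<Longrightarrow> x \<prec> y \<or> x = y \<or> y \<prec> x"
  using PA9 by blast
lemma add_lt_mono: "x \<in> C \<Longrightarrow> y \<in> C \<Longrightarrow> w \<in> C \<Longrightarrow> x \<prec> y \<Longrightarrow> x \<oplus> w \<prec> y \<oplus> w"
  using PA10 by blast
lemma mul_lt_mono: "x \<in> C \<Longrightarrow> y \<in> C \<Longrightarrow> w \<in> C \<Longrightarrow> Z \<prec> w \<Longrightarrow> x \<prec> y \<Longrightarrow> x \<otimes> w \<prec> y \<otimes> w"
  using PA11 by blast
lemma lt_ex: "x \<in> C \<Longrightarrow> y \<in> C \<Longrightarrow> x \<prec> y \<Longrightarrow> \<exists>w\<in>C. x \<oplus> w = y"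
  using PA12 by blast
lemma Z_lt_U[simp]: "Z \<prec> U"
  using PA13 by blast
lemma pos_ge1: "x \<in> C \<Longrightarrow> Z \<prec> x \<Longrightarrow> U \<preceq> x"
  using PA14 by blast
lemma Z_le[simp]: "x \<in> C \<Longrightarrow> Z \<preceq> x"
  using PA15 by blast

lemma Z_ne_U[simp]: "Z \<noteq> U" "U \<noteq> Z" using Z_lt_U by (auto simp: lt_def)
lemma lt_def': "x \<prec> y \<longleftrightarrow> x \<preceq> y \<and> x \<noteq> y" by (simp add: lt_def)
lemma lt_irrefl[simp]: "\<not> x \<prec> x" by (simp add: lt_def)
lemma le_iff: "x \<in> C \<Longrightarrow> x \<preceq> y \<longleftrightarrow> x \<prec> y \<or> x = y" by (auto simp: lt_def)
lemma lt_imp_le: "x \<prec> y \<Longrightarrow> x \<preceq> y" by (simp add: lt_def)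
lemma lt_asym: "x \<in> C \<Longrightarrow> y \<in> C \<Longrightarrow> x \<prec> y \<Longrightarrow> \<not> y \<prec> x"
  using lt_trans[of x y x] by auto
lemma not_lt: assumes "x \<in> C" "y \<in> C" shows "\<not> x \<prec> y \<longleftrightarrow> y \<preceq> x"
  using trich[OF assms] lt_asym[OF assms] le_iff[OF assms(2), of x] by auto
lemma not_le: "x \<in> C \<Longrightarrow> y \<in> C \<Longrightarrow> \<not> x \<preceq> y \<longleftrightarrow> y \<prec> x"
  using not_lt[of y x] by blast
lemma le_trans: "x \<in> C \<Longrightarrow> y \<in> C \<Longrightarrow> w \<in> C \<Longrightarrow> x \<preceq> y \<Longrightarrow> y \<preceq> w \<Longrightarrow> x \<preceq> w"
  using le_iff[of x y] le_iff[of y w] le_iff[of x w] lt_trans[of x y w] by auto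
lemma le_lt_trans: "x \<in> C \<Longrightarrow> y \<in> C \<Longrightarrow> w \<in> C \<Longrightarrow> x \<preceq> y \<Longrightarrow> y \<prec> w \<Longrightarrow> x \<prec> w"
  using le_iff[of x y] lt_trans[of x y w] by auto
lemma lt_le_trans: "x \<in> C \<Longrightarrow> y \<in> C \<Longrightarrow> w \<in> C \<Longrightarrow> x \<prec> y \<Longrightarrow> y \<preceq> w \<Longrightarrow> x \<prec> w"
  using le_iff[of y w] lt_trans[of x y w] by auto
lemma le_antisym: "x \<in> C \<Longrightarrow> y \<in> C \<Longrightarrow> x \<preceq> y \<Longrightarrow> y \<preceq> x \<Longrightarrow> x = y"
  using not_lt[of x y] le_iff[of x y] by auto
lemma linear: "x \<in> C \<Longrightarrow> y \<in> C \<Longrightarrow> x \<preceq> y \<or> y \<preceq> x"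
  using not_lt[of x y] lt_imp_le[of x y] by blast

lemma add_0_left[simp]: "x \<in> C \<Longrightarrow> Z \<oplus> x = x" using add_comm[of Z x] by simp
lemma mul_0_left[simp]: "x \<in> C \<Longrightarrow> Z \<otimes> x = Z" using mul_comm[of Z x] by simp
lemma mul_1_left[simp]: "x \<in> C \<Longrightarrow> U \<otimes> x = x" using mul_comm[of U x] by simp
lemma add_left_comm: "x \<in> C \<Longrightarrow> y \<in> C \<Longrightarrow> w \<in> C \<Longrightarrow> x \<oplus> (y \<oplus> w) = y \<oplus> (x \<oplus> w)"
  using add_assoc[of x y w] add_assoc[of y x w] add_comm[of x y] by simp
lemma mul_left_comm: "x \<in> C \<Longrightarrow> y \<in> C \<Longrightarrow> w \<in> C \<Longrightarrow> x \<otimes> (y \<otimes> w) = y \<otimes> (x \<otimes> w)"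
  using mul_assoc[of x y w] mul_assoc[of y x w] mul_comm[of x y] by simp
lemma distR: "x \<in> C \<Longrightarrow> y \<in> C \<Longrightarrow> w \<in> C \<Longrightarrow> (y \<oplus> w) \<otimes> x = y \<otimes> x \<oplus> w \<otimes> x"
  using distL[of x y w] mul_comm[of "y \<oplus> w" x] mul_comm[of y x] mul_comm[of w x] by simp

lemma add_lt_mono_iff: assumes "x \<in> C" "y \<in> C" "w \<in> C" shows "x \<oplus> w \<prec> y \<oplus> w \<longleftrightarrow> x \<prec> y"
  using add_lt_mono[OF assms] add_lt_mono[of y x w] assms trich[of x y] lt_asym[of "x \<oplus> w" "y \<oplus> w"] by auto
lemma add_lt_mono_iff2: "x \<in> C \<Longrightarrow> y \<in> C \<Longrightarrow> w \<in> C \<Longrightarrow> w \<oplus> x \<prec> w \<oplus> y \<longleftrightarrow> x \<prec> y"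
  using add_lt_mono_iff[of x y w] add_comm[of w x] add_comm[of w y] by simp
lemma add_cancel: "x \<in> C \<Longrightarrow> y \<in> C \<Longrightarrow> w \<in> C \<Longrightarrow> x \<oplus> w = y \<oplus> w \<longleftrightarrow> x = y"
  using add_lt_mono[of x y w] add_lt_mono[of y x w] trich[of x y] by auto
lemma add_cancel2: "x \<in> C \<Longrightarrow> y \<in> C \<Longrightarrow> w \<in> C \<Longrightarrow> w \<oplus> x = w \<oplus> y \<longleftrightarrow> x = y"
  using add_cancel[of x y w] add_comm[of w x] add_comm[of w y] by simp
lemma add_le_mono_iff: "x \<in> C \<Longrightarrow> y \<in> C \<Longrightarrow> w \<in> C \<Longrightarrow> x \<oplus> w \<preceq> y \<oplus> w \<longleftrightarrow> x \<preceq> y"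
  using add_lt_mono_iff[of x y w] add_cancel[of x y w] le_iff[of x y] le_iff[of "x \<oplus> w" "y \<oplus> w"] by auto
lemma add_le_mono_iff2: "x \<in> C \<Longrightarrow> y \<in> C \<Longrightarrow> w \<in> C \<Longrightarrow> w \<oplus> x \<preceq> w \<oplus> y \<longleftrightarrow> x \<preceq> y"
  using add_le_mono_iff[of x y w] add_comm[of w x] add_comm[of w y] by simp
lemma le_add: "x \<in> C \<Longrightarrow> y \<in> C \<Longrightarrow> x \<preceq> x \<oplus> y"
  using add_le_mono_iff2[of Z y x] by simp
lemma le_add2: "x \<in> C \<Longrightarrow> y \<in> C \<Longrightarrow> x \<preceq> y \<oplus> x"
  using le_add[of x y] add_comm[of x y] by simp
lemma le_ex: "x \<in> C \<Longrightarrow> y \<in> C \<Longrightarrow> x \<preceq> y \<Longrightarrow> \<exists>w\<in>C. x \<oplus> w = y"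
proof -
  assume a: "x \<in> C" "y \<in> C" "x \<preceq> y"
  show ?thesis
  proof (cases "x = y")
    case True then show ?thesis using a by (intro bexI[of _ Z]) auto
  qed (use a le_iff[of x y] lt_ex[of x y] in auto)
qed
lemma le_ex_iff: "x \<in> C \<Longrightarrow> y \<in> C \<Longrightarrow> x \<preceq> y \<longleftrightarrow> (\<exists>w\<in>C. x \<oplus> w = y)"
  using le_ex le_add by blast
lemma add_le_mono: "a \<in> C \<Longrightarrow> b \<in> C \<Longrightarrow> c \<in> C \<Longrightarrow> d \<in> C \<Longrightarrow> a \<preceq> b \<Longrightarrow> c \<preceq> d \<Longrightarrow> a \<oplus> c \<preceq> b \<oplus> d"
  using add_le_mono_iff[of a b c] add_le_mono_iff2[of c d b] le_trans[of "a \<oplus> c" "b \<oplus> c" "b \<oplus> d"] by simp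
lemma pos_iff: "x \<in> C \<Longrightarrow> Z \<prec> x \<longleftrightarrow> x \<noteq> Z"
  using Z_le[of x] by (auto simp: lt_def)
lemma lt_succ: "x \<in> C \<Longrightarrow> x \<prec> x \<oplus> U"
  using add_lt_mono_iff2[of Z U x] by simp
lemma lt_succ_le: assumes "x \<in> C" "y \<in> C" shows "x \<prec> y \<longleftrightarrow> x \<oplus> U \<preceq> y"
proof
  assume "x \<prec> y"
  then obtain w where w: "w \<in> C" "x \<oplus> w = y" using lt_ex assms by blast
  then have "w \<noteq> Z" using \<open>x \<prec> y\<close> assms by auto
  then have "U \<preceq> w" using pos_ge1 pos_iff w by blast
  then show "x \<oplus> U \<preceq> y" using w assms add_le_mono_iff2[of U w x] by simp
next
  assume "x \<oplus> U \<preceq> y"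
  then show "x \<prec> y" using lt_succ[of x] assms lt_le_trans[of x "x \<oplus> U" y] by simp
qed
lemma le_succ_iff: "x \<in> C \<Longrightarrow> y \<in> C \<Longrightarrow> x \<preceq> y \<longleftrightarrow> x \<prec> y \<oplus> U"
  using lt_succ_le[of x "y \<oplus> U"] add_le_mono_iff[of x y U] by simp

lemma mul_lt_mono_iff: assumes "x \<in> C" "y \<in> C" "w \<in> C" "Z \<prec> w" shows "x \<otimes> w \<prec> y \<otimes> w \<longleftrightarrow> x \<prec> y"
  using mul_lt_mono[OF assms(1-4)] mul_lt_mono[of y x w] assms trich[of x y] lt_asym[of "x \<otimes> w" "y \<otimes> w"] by auto
lemma mul_cancel: "x \<in> C \<Longrightarrow> y \<in> C \<Longrightarrow> w \<in> C \<Longrightarrow> Z \<prec> w \<Longrightarrow> x \<otimes> w = y \<otimes> w \<longleftrightarrow> x = y"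
  using mul_lt_mono[of x y w] mul_lt_mono[of y x w] trich[of x y] by auto
lemma mul_le_mono_iff: "x \<in> C \<Longrightarrow> y \<in> C \<Longrightarrow> w \<in> C \<Longrightarrow> Z \<prec> w \<Longrightarrow> x \<otimes> w \<preceq> y \<otimes> w \<longleftrightarrow> x \<preceq> y"
  using mul_lt_mono_iff[of x y w] mul_cancel[of x y w] le_iff[of x y] le_iff[of "x \<otimes> w" "y \<otimes> w"] by auto
lemma mul_le_mono_r: "x \<in> C \<Longrightarrow> y \<in> C \<Longrightarrow> w \<in> C \<Longrightarrow> x \<preceq> y \<Longrightarrow> x \<otimes> w \<preceq> y \<otimes> w"
  using mul_le_mono_iff[of x y w] pos_iff[of w] by (cases "w = Z") auto
lemma mul_le_mono_l: "x \<in> C \<Longrightarrow> y \<in> C \<Longrightarrow> w \<in> C \<Longrightarrow> x \<preceq> y \<Longrightarrow> w \<otimes> x \<preceq> w \<otimes> y"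
  using mul_le_mono_r[of x y w] mul_comm[of w x] mul_comm[of w y] by simp
lemma mul_le_mono: "a \<in> C \<Longrightarrow> b \<in> C \<Longrightarrow> c \<in> C \<Longrightarrow> d \<in> C \<Longrightarrow> a \<preceq> b \<Longrightarrow> c \<preceq> d \<Longrightarrow> a \<otimes> c \<preceq> b \<otimes> d"
  using mul_le_mono_r[of a b c] mul_le_mono_l[of c d b] le_trans[of "a \<otimes> c" "b \<otimes> c" "b \<otimes> d"] by simp
lemma mul_pos: "x \<in> C \<Longrightarrow> y \<in> C \<Longrightarrow> Z \<prec> x \<Longrightarrow> Z \<prec> y \<Longrightarrow> Z \<prec> x \<otimes> y"
  using mul_lt_mono[of Z x y] by simp
lemma mul_eq_0: "x \<in> C \<Longrightarrow> y \<in> C \<Longrightarrow> x \<otimes> y = Z \<longleftrightarrow> x = Z \<or> y = Z"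
  using mul_pos[of x y] pos_iff[of x] pos_iff[of y] pos_iff[of "x \<otimes> y"] by auto
lemma le_mul: "x \<in> C \<Longrightarrow> y \<in> C \<Longrightarrow> Z \<prec> y \<Longrightarrow> x \<preceq> x \<otimes> y"
  using mul_le_mono_l[of U y x] pos_ge1[of y] by simp
lemma mul_eq_1: "x \<in> C \<Longrightarrow> y \<in> C \<Longrightarrow> x \<otimes> y = U \<Longrightarrow> x = U"
proof -
  assume a: "x \<in> C" "y \<in> C" "x \<otimes> y = U"
  then have "x \<noteq> Z" "y \<noteq> Z" by auto
  then have "x \<preceq> U" using a le_mul[of x y] pos_iff[of y] by simp
  moreover have "U \<preceq> x" using \<open>x \<noteq> Z\<close> a pos_ge1 pos_iff by blast
  ultimately show ?thesis using a le_antisym[of x U] by auto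
qed
lemma lt_1_iff: "x \<in> C \<Longrightarrow> x \<prec> U \<longleftrightarrow> x = Z"
  using pos_ge1[of x] not_lt[of x U] pos_iff[of x] by auto

lemma num_Suc: "num M (Suc n) = num M n \<oplus> U"
  by (cases n) auto
lemma num_C[simp]: "num M n \<in> C"
  by (induct n) (auto simp: num_Suc)
lemma num_add: "num M (m + n) = num M m \<oplus> num M n"
  by (induct n) (auto simp: num_Suc add_assoc)
lemma num_mul: "num M (m * n) = num M m \<otimes> num M n"
  by (induct n) (auto simp: num_Suc num_add distL add_comm)
lemma num_lt: "num M m \<prec> num M n \<longleftrightarrow> m < n"
proof -
  have 1: "m < n \<Longrightarrow> num M m \<prec> num M n" for m n
  proof (induct n)
    case (Suc n)
    have "num M n \<prec> num M (Suc n)" using lt_succ[of "num M n"] num_Suc by simp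
    then show ?case using Suc lt_trans[of "num M m" "num M n" "num M (Suc n)"]
      by (cases "m = n") (auto simp: less_Suc_eq)
  qed simp
  show ?thesis using 1[of m n] 1[of n m] lt_asym[of "num M m" "num M n"] by (cases m n rule: linorder_cases) auto
qed
lemma num_le: "num M m \<preceq> num M n \<longleftrightarrow> m \<le> n"
  using not_lt[of "num M n" "num M m"] num_lt[of n m] by (metis num_C not_less)
lemma num_inj: "num M m = num M n \<longleftrightarrow> m = n"
  using num_lt[of m n] num_lt[of n m] by (cases "m = n") auto
lemma num_0: "num M 0 = Z" and num_1: "num M 1 = U" by auto

lemma below_num: "x \<in> C \<Longrightarrow> x \<prec> num M n \<Longrightarrow> \<exists>k<n. x = num M k"
proof (induct n arbitrary: x)
  case 0 then show ?case using not_lt[of x Z] by simp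
next
  case (Suc n)
  then have "x \<preceq> num M n" using num_Suc le_succ_iff[of x "num M n"] by simp
  then show ?case using Suc le_iff[of x "num M n"] by (auto intro: less_SucI)
qed

lemma sig_ind:
  assumes "sigma1 p" "range r \<subseteq> C" "\<And>a. a \<in> C \<Longrightarrow> sat M (r(x := a)) p = Q a"
    "Q Z" "\<And>a. a \<in> C \<Longrightarrow> Q a \<Longrightarrow> Q (a \<oplus> U)" "a \<in> C"
  shows "Q a"
proof -
  have "induction_inst M p x" using ind assms(1) by blast
  then have "sat M (r(x := zer M)) p \<and> (\<forall>a\<in>C. sat M (r(x := a)) p \<longrightarrow> sat M (r(x := pl M a (one M))) p)
        \<longrightarrow> (\<forall>a\<in>C. sat M (r(x := a)) p)"
    unfolding induction_inst_def using assms(2) by blast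
  moreover have "sat M (r(x := zer M)) p" using assms(3)[of Z] assms(4) by simp
  moreover have "\<forall>a\<in>C. sat M (r(x := a)) p \<longrightarrow> sat M (r(x := pl M a (one M))) p"
    using assms(3,5) by simp
  ultimately show ?thesis using assms(3,6) by simp
qed

lemma strong_ind:
  assumes "delta0 p" "x \<noteq> y" "range r \<subseteq> C"
    "\<And>a c. a \<in> C \<Longrightarrow> c \<in> C \<Longrightarrow> sat M (r(x := a, y := c)) p = Q c"
    "\<And>a. a \<in> C \<Longrightarrow> (\<And>c. c \<in> C \<Longrightarrow> c \<prec> a \<Longrightarrow> Q c) \<Longrightarrow> Q a" "a \<in> C"
  shows "Q a"
proof -
  let ?q = "Allf y (Impf (Lef (V y) (V x)) p)"
  have d: "sigma1 ?q" using assms(1,2) by (auto intro!: sigma1.intros delta0.intros)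
  have s: "sat M (r(x := a)) ?q = (\<forall>c\<in>C. c \<preceq> a \<longrightarrow> Q c)" if "a \<in> C" for a
  proof -
    have "sat M (r(x := a)) ?q = (\<forall>c\<in>C. c \<preceq> a \<longrightarrow> sat M (r(x := a, y := c)) p)"
      using assms(2) by simp
    then show ?thesis using assms(4) that by simp
  qed
  have lZ: "\<not> c \<prec> Z" if "c \<in> C" for c using that not_lt[of c Z] by simp
  have QZ: "Q Z" using assms(5)[of Z] lZ by simp
  have base: "\<forall>c\<in>C. c \<preceq> Z \<longrightarrow> Q c"
  proof (intro ballI impI)
    fix c assume "c \<in> C" "c \<preceq> Z"
    then have "c = Z" using le_antisym by simp
    then show "Q c" using QZ by simp
  qed
  have step: "\<forall>c\<in>C. c \<preceq> a \<oplus> U \<longrightarrow> Q c" if a: "a \<in> C" "\<forall>c\<in>C. c \<preceq> a \<longrightarrow> Q c" for a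
  proof (intro ballI impI)
    have "Q (a \<oplus> U)" using assms(5)[of "a \<oplus> U"] a le_succ_iff by simp
    moreover fix c assume c: "c \<in> C" "c \<preceq> a \<oplus> U"
    moreover have "c \<prec> a \<oplus> U \<Longrightarrow> c \<preceq> a" using le_succ_iff a c by simp
    ultimately show "Q c" using a le_iff[of c] by auto
  qed
  have "\<forall>c\<in>C. c \<preceq> a \<longrightarrow> Q c"
    by (rule sig_ind[OF d assms(3) s base step assms(6)])
  then show ?thesis using assms(6) by auto
qed

lemma div_exists:
  assumes m: "m \<in> C" "Z \<prec> m" and x: "x \<in> C"
  shows "\<exists>q\<in>C. \<exists>r\<in>C. x = q \<otimes> m \<oplus> r \<and> r \<prec> m"
proof -
  let ?p = "Exf 2 (Conjf (Lef (V 2) (V 0)) (Exf 3 (Conjf (Lef (V 3) (V 0))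
              (Conjf (Eqf (V 0) (Pt (Tt (V 2) (V 1)) (V 3))) (Conjf (Lef (V 3) (V 1)) (Negf (Eqf (V 3) (V 1))))))))"
  let ?Q = "\<lambda>x. \<exists>q\<in>C. q \<preceq> x \<and> (\<exists>r\<in>C. r \<preceq> x \<and> x = q \<otimes> m \<oplus> r \<and> r \<prec> m)"
  have d: "sigma1 ?p" by (auto intro!: sigma1.intros delta0.intros)
  have r: "range ((\<lambda>_. Z)(1 := m)) \<subseteq> C" using m by auto
  have sat: "\<And>a. a \<in> C \<Longrightarrow> sat M (((\<lambda>_. Z)(1 := m))(0 := a)) ?p = ?Q a"
    by (auto simp: lt_def)
  have base: "?Q Z" using m by (intro bexI[of _ Z] conjI) auto
  have step: "?Q (a \<oplus> U)" if a: "a \<in> C" "?Q a" for a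
  proof -
    obtain q r where qr: "q \<in> C" "r \<in> C" "q \<preceq> a" "r \<preceq> a" "a = q \<otimes> m \<oplus> r" "r \<prec> m" using a by blast
    have "r \<oplus> U \<preceq> m" using qr m lt_succ_le[of r m] by blast
    then consider "r \<oplus> U \<prec> m" | "r \<oplus> U = m" using le_iff[of "r \<oplus> U" m] qr by auto
    then show "?Q (a \<oplus> U)"
    proof cases
      case 1
      have "a \<oplus> U = q \<otimes> m \<oplus> (r \<oplus> U)" using qr m add_assoc[of "q \<otimes> m" r U] by simp
      moreover have "q \<preceq> a \<oplus> U" using qr a le_add[of a U] le_trans[of q a "a \<oplus> U"] by simp
      moreover have "r \<oplus> U \<preceq> a \<oplus> U" using qr a add_le_mono_iff[of r a U] by simp
      ultimately show ?thesis using 1 qr by (intro bexI[of _ q] conjI bexI[of _ "r \<oplus> U"]) auto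
    next
      case 2
      have e: "a \<oplus> U = (q \<oplus> U) \<otimes> m \<oplus> Z" using qr 2 m add_assoc[of "q \<otimes> m" r U] distR[of m q U] by simp
      have "q \<otimes> m \<preceq> a" using qr le_add[of "q \<otimes> m" r] m by simp
      moreover have "q \<preceq> q \<otimes> m" using le_mul qr m by blast
      ultimately have "q \<preceq> a" using le_trans[of q "q \<otimes> m" a] qr m a by simp
      then have "q \<oplus> U \<preceq> a \<oplus> U" using qr a add_le_mono_iff[of q a U] by simp
      then show ?thesis using e m a qr by (intro bexI[of _ "q \<oplus> U"] conjI bexI[of _ Z]) auto
    qed
  qed
  have "?Q x" by (rule sig_ind[OF d r sat base step x])
  then show ?thesis by blast
qed

lemma div_unique:
  assumes C: "m \<in> C" "q \<in> C" "r \<in> C" "q' \<in> C" "r' \<in> C"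
    and e: "q \<otimes> m \<oplus> r = q' \<otimes> m \<oplus> r'" "r \<prec> m" "r' \<prec> m"
  shows "q = q' \<and> r = r'"
proof -
  have *: False if "q \<prec> q'" "q \<otimes> m \<oplus> r = q' \<otimes> m \<oplus> r'" "r \<prec> m" "q\<in>C" "q'\<in>C" "r\<in>C" "r'\<in>C" for q q' r r'
  proof -
    have "q \<oplus> U \<preceq> q'" using that lt_succ_le by blast
    then have "(q \<oplus> U) \<otimes> m \<preceq> q' \<otimes> m" using mul_le_mono_r that C by simp
    moreover have "(q \<oplus> U) \<otimes> m = q \<otimes> m \<oplus> m" using distR[of m q U] that C by simp
    moreover have "q' \<otimes> m \<preceq> q' \<otimes> m \<oplus> r'" using le_add that C by simp
    ultimately have "q \<otimes> m \<oplus> m \<preceq> q' \<otimes> m \<oplus> r'" using le_trans[of "q \<otimes> m \<oplus> m" "q' \<otimes> m" "q' \<otimes> m \<oplus> r'"] that C by simp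
    moreover have "q \<otimes> m \<oplus> r \<prec> q \<otimes> m \<oplus> m" using that C add_lt_mono_iff2[of r m "q \<otimes> m"] by simp
    ultimately show False using that C lt_le_trans[of "q \<otimes> m \<oplus> r" "q \<otimes> m \<oplus> m" "q' \<otimes> m \<oplus> r'"] by simp
  qed
  have "q = q'" using *[of q q' r r'] *[of q' q r' r] e C trich[of q q'] by auto
  then show ?thesis using e C add_cancel2 by simp
qed

definition dv where "dv x m = (SOME q. q \<in> C \<and> (\<exists>r\<in>C. x = q \<otimes> m \<oplus> r \<and> r \<prec> m))"
definition md where "md x m = (SOME r. r \<in> C \<and> x = dv x m \<otimes> m \<oplus> r \<and> r \<prec> m)"

lemma divmod:
  assumes "m \<in> C" "Z \<prec> m" "x \<in> C"
  shows "dv x m \<in> C" "md x m \<in> C" "x = dv x m \<otimes> m \<oplus> md x m" "md x m \<prec> m"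
proof -
  have "\<exists>q. q \<in> C \<and> (\<exists>r\<in>C. x = q \<otimes> m \<oplus> r \<and> r \<prec> m)" using div_exists[OF assms] by blast
  then have 1: "dv x m \<in> C \<and> (\<exists>r\<in>C. x = dv x m \<otimes> m \<oplus> r \<and> r \<prec> m)"
    unfolding dv_def by (rule someI_ex)
  then have "\<exists>r. r \<in> C \<and> x = dv x m \<otimes> m \<oplus> r \<and> r \<prec> m" by blast
  then have 2: "md x m \<in> C \<and> x = dv x m \<otimes> m \<oplus> md x m \<and> md x m \<prec> m"
    unfolding md_def by (rule someI_ex)
  show "dv x m \<in> C" "md x m \<in> C" "x = dv x m \<otimes> m \<oplus> md x m" "md x m \<prec> m" using 1 2 by auto
qed

lemma md_C[simp]: "m \<in> C \<Longrightarrow> Z \<prec> m \<Longrightarrow> x \<in> C \<Longrightarrow> md x m \<in> C" using divmod by blast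
lemma dv_C[simp]: "m \<in> C \<Longrightarrow> Z \<prec> m \<Longrightarrow> x \<in> C \<Longrightarrow> dv x m \<in> C" using divmod by blast

lemma md_unique:
  assumes "m \<in> C" "Z \<prec> m" "q \<in> C" "r \<in> C" "x = q \<otimes> m \<oplus> r" "r \<prec> m"
  shows "md x m = r" "dv x m = q"
  using div_unique[of m "dv x m" "md x m" q r] divmod[of m x] assms by auto


lemma lnp:
  assumes "delta0 p" "x \<noteq> y" "range r \<subseteq> C"
    "\<And>a c. a \<in> C \<Longrightarrow> c \<in> C \<Longrightarrow> sat M (r(x := a, y := c)) p = S c"
    "c \<in> C" "S c"
  shows "\<exists>c\<in>C. S c \<and> (\<forall>c'\<in>C. c' \<prec> c \<longrightarrow> \<not> S c')"
proof (rule ccontr)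
  assume h: "\<not> ?thesis"
  have d: "delta0 (Negf p)" using assms(1) by (rule delta0.intros)
  have s: "\<And>a c. a \<in> C \<Longrightarrow> c \<in> C \<Longrightarrow> sat M (r(x := a, y := c)) (Negf p) = (\<not> S c)"
    using assms(4) by simp
  have st: "\<not> S a" if "a \<in> C" "\<And>c. c \<in> C \<Longrightarrow> c \<prec> a \<Longrightarrow> \<not> S c" for a
    using h that by blast
  have "\<not> S c" by (rule strong_ind[OF d assms(2,3) s st assms(5)])
  then show False using assms(6) by blast
qed

lemma divE:
  assumes "m \<in> C" "Z \<prec> m" "x \<in> C"
  obtains q r where "q \<in> C" "r \<in> C" "x = q \<otimes> m \<oplus> r" "r \<prec> m" "md x m = r"
  using divmod[OF assms] by blast

lemma md_add_mult:
  assumes "m \<in> C" "Z \<prec> m" "x \<in> C" "k \<in> C"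
  shows "md (x \<oplus> k \<otimes> m) m = md x m"
proof -
  obtain q r where qr: "q \<in> C" "r \<in> C" "x = q \<otimes> m \<oplus> r" "r \<prec> m" "md x m = r" by (rule divE[OF assms(1-3)])
  have "x \<oplus> k \<otimes> m = (q \<otimes> m \<oplus> r) \<oplus> k \<otimes> m" using qr(3) by simp
  also have "\<dots> = q \<otimes> m \<oplus> (r \<oplus> k \<otimes> m)" by (rule add_assoc) (use qr assms in auto)
  also have "\<dots> = q \<otimes> m \<oplus> (k \<otimes> m \<oplus> r)" using add_comm[of r "k \<otimes> m"] qr assms by simp
  also have "\<dots> = (q \<otimes> m \<oplus> k \<otimes> m) \<oplus> r" by (rule add_assoc[symmetric]) (use qr assms in auto)
  also have "\<dots> = (q \<oplus> k) \<otimes> m \<oplus> r" using distR[of m q k] qr assms by simp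
  finally have e: "x \<oplus> k \<otimes> m = (q \<oplus> k) \<otimes> m \<oplus> r" .
  show ?thesis using md_unique(1)[OF _ _ _ _ e] qr assms by simp
qed
lemma md_mult_self: "m \<in> C \<Longrightarrow> Z \<prec> m \<Longrightarrow> k \<in> C \<Longrightarrow> md (k \<otimes> m) m = Z"
  using md_add_mult[of m Z k] md_unique[of m Z Z Z] by simp
lemma md_self: "m \<in> C \<Longrightarrow> Z \<prec> m \<Longrightarrow> md m m = Z"
  using md_mult_self[of m U] by simp
lemma md_small: "m \<in> C \<Longrightarrow> Z \<prec> m \<Longrightarrow> x \<in> C \<Longrightarrow> x \<prec> m \<Longrightarrow> md x m = x"
  using md_unique[of m Z x x] by simp
lemma md_lt: "m \<in> C \<Longrightarrow> Z \<prec> m \<Longrightarrow> x \<in> C \<Longrightarrow> md x m \<prec> m"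
  using divmod by blast
lemma md_md: "m \<in> C \<Longrightarrow> Z \<prec> m \<Longrightarrow> x \<in> C \<Longrightarrow> md (md x m) m = md x m"
  using md_small[of m "md x m"] md_lt[of m x] by simp
lemma md_add: "m \<in> C \<Longrightarrow> Z \<prec> m \<Longrightarrow> x \<in> C \<Longrightarrow> y \<in> C \<Longrightarrow> md (x \<oplus> y) m = md (md x m \<oplus> y) m"
proof -
  assume a: "m \<in> C" "Z \<prec> m" "x \<in> C" "y \<in> C"
  obtain q r where qr: "q \<in> C" "r \<in> C" "x = q \<otimes> m \<oplus> r" "r \<prec> m" "md x m = r" by (rule divE[OF a(1-3)])
  have "x \<oplus> y = (r \<oplus> y) \<oplus> q \<otimes> m" using qr a
    add_comm[of "q \<otimes> m" r] add_assoc[of r "q \<otimes> m" y]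
    add_assoc[of r y "q \<otimes> m"] add_comm[of "q \<otimes> m" y] by simp
  then show ?thesis using md_add_mult[of m "r \<oplus> y" q] a qr by simp
qed
lemma md_mul: "m \<in> C \<Longrightarrow> Z \<prec> m \<Longrightarrow> x \<in> C \<Longrightarrow> y \<in> C \<Longrightarrow> md (x \<otimes> y) m = md (md x m \<otimes> y) m"
proof -
  assume a: "m \<in> C" "Z \<prec> m" "x \<in> C" "y \<in> C"
  obtain q r where qr: "q \<in> C" "r \<in> C" "x = q \<otimes> m \<oplus> r" "r \<prec> m" "md x m = r" by (rule divE[OF a(1-3)])
  have "x \<otimes> y = (q \<otimes> m) \<otimes> y \<oplus> r \<otimes> y" using qr a distR[of y "q \<otimes> m" r] by simp
  also have "(q \<otimes> m) \<otimes> y = (q \<otimes> y) \<otimes> m" using qr a mul_assoc[of q m y]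
    mul_assoc[of q y m] mul_comm[of m y] by simp
  finally have "x \<otimes> y = (r \<otimes> y) \<oplus> (q \<otimes> y) \<otimes> m"
    using qr a add_comm[of "(q \<otimes> y) \<otimes> m" "r \<otimes> y"] by simp
  then show ?thesis using md_add_mult[of m "r \<otimes> y" "q \<otimes> y"] a qr by simp
qed

definition cg where "cg m x y \<longleftrightarrow> md x m = md y m"

lemma cg_add: "m \<in> C \<Longrightarrow> Z \<prec> m \<Longrightarrow> x \<in> C \<Longrightarrow> y \<in> C \<Longrightarrow> z \<in> C \<Longrightarrow> cg m x y \<Longrightarrow> cg m (x \<oplus> z) (y \<oplus> z)"
  unfolding cg_def using md_add[of m x z] md_add[of m y z] by simp
lemma cg_mul: "m \<in> C \<Longrightarrow> Z \<prec> m \<Longrightarrow> x \<in> C \<Longrightarrow> y \<in> C \<Longrightarrow> z \<in> C \<Longrightarrow> cg m x y \<Longrightarrow> cg m (x \<otimes> z) (y \<otimes> z)"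
  unfolding cg_def using md_mul[of m x z] md_mul[of m y z] by simp
lemma cg_sym: "cg m x y \<Longrightarrow> cg m y x" unfolding cg_def by simp
lemma cg_trans[trans]: "cg m x y \<Longrightarrow> cg m y z \<Longrightarrow> cg m x z" unfolding cg_def by simp
lemma cg_md: "m \<in> C \<Longrightarrow> Z \<prec> m \<Longrightarrow> x \<in> C \<Longrightarrow> cg m (md x m) x" unfolding cg_def by (simp add: md_md)
lemma cg_cancel:
  assumes "m \<in> C" "Z \<prec> m" "x \<in> C" "y \<in> C" "c \<in> C" "cg m (x \<oplus> c) (y \<oplus> c)"
  shows "cg m x y"
proof -
  obtain q r where qr: "q \<in> C" "r \<in> C" "c = q \<otimes> m \<oplus> r" "r \<prec> m" "md c m = r" by (rule divE[OF assms(1,2,5)])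
  obtain t where t: "t \<in> C" "r \<oplus> t = m" using lt_ex[of r m] qr assms by auto
  have "c \<oplus> t = q \<otimes> m \<oplus> (r \<oplus> t)" using qr assms t add_assoc[of "q \<otimes> m" r t] by simp
  also have "\<dots> = (q \<oplus> U) \<otimes> m" using t qr assms distR[of m q U] by simp
  finally have ct: "c \<oplus> t = (q \<oplus> U) \<otimes> m" .
  have "cg m ((x \<oplus> c) \<oplus> t) ((y \<oplus> c) \<oplus> t)" using cg_add[of m "x \<oplus> c" "y \<oplus> c" t] assms t by simp
  then have "cg m (x \<oplus> (q \<oplus> U) \<otimes> m) (y \<oplus> (q \<oplus> U) \<otimes> m)"
    using ct assms t add_assoc[of x c t] add_assoc[of y c t] by simp
  then show ?thesis unfolding cg_def using md_add_mult[of m x "q \<oplus> U"] md_add_mult[of m y "q \<oplus> U"] assms qr by simp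
qed

lemma dvd_md: "d \<in> C \<Longrightarrow> Z \<prec> d \<Longrightarrow> n \<in> C \<Longrightarrow> dvd_in M d n \<longleftrightarrow> md n d = Z"
proof
  assume a: "d \<in> C" "Z \<prec> d" "n \<in> C" "dvd_in M d n"
  then obtain q where "q \<in> C" "n = d \<otimes> q" unfolding dvd_in_def by blast
  then show "md n d = Z" using md_mult_self[of d q] a mul_comm[of d q] by simp
next
  assume a: "d \<in> C" "Z \<prec> d" "n \<in> C" "md n d = Z"
  obtain q r where qr: "q \<in> C" "r \<in> C" "n = q \<otimes> d \<oplus> r" "r \<prec> d" "md n d = r" by (rule divE[OF a(1-3)])
  then have "n = d \<otimes> q" using a mul_comm[of d q] by simp
  then show "dvd_in M d n" unfolding dvd_in_def using qr by auto
qed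

lemma dvd_refl[simp]: "x \<in> C \<Longrightarrow> dvd_in M x x" unfolding dvd_in_def by (intro bexI[of _ U]) auto
lemma dvd_1[simp]: "x \<in> C \<Longrightarrow> dvd_in M U x" unfolding dvd_in_def by (intro bexI[of _ x]) auto
lemma dvd_0[simp]: "x \<in> C \<Longrightarrow> dvd_in M x Z" unfolding dvd_in_def by (intro bexI[of _ Z]) auto
lemma dvd_mulR: "x \<in> C \<Longrightarrow> y \<in> C \<Longrightarrow> dvd_in M x (x \<otimes> y)" unfolding dvd_in_def by blast
lemma dvd_mulL: "x \<in> C \<Longrightarrow> y \<in> C \<Longrightarrow> dvd_in M x (y \<otimes> x)" unfolding dvd_in_def using mul_comm[of y x] by blast
lemma dvd_trans: "a \<in> C \<Longrightarrow> b \<in> C \<Longrightarrow> c \<in> C \<Longrightarrow> dvd_in M a b \<Longrightarrow> dvd_in M b c \<Longrightarrow> dvd_in M a c"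
  unfolding dvd_in_def using mul_assoc by (smt (verit) tm_C)
lemma dvd_mul: "a \<in> C \<Longrightarrow> b \<in> C \<Longrightarrow> c \<in> C \<Longrightarrow> dvd_in M a b \<Longrightarrow> dvd_in M a (b \<otimes> c)"
  using dvd_trans[of a b "b \<otimes> c"] dvd_mulR[of b c] by simp
lemma dvd_mul2: "a \<in> C \<Longrightarrow> b \<in> C \<Longrightarrow> c \<in> C \<Longrightarrow> dvd_in M a b \<Longrightarrow> dvd_in M a (c \<otimes> b)"
  using dvd_mul[of a b c] mul_comm[of b c] by simp
lemma dvd_mul_mono: assumes "a \<in> C" "b \<in> C" "c \<in> C" "d \<in> C" "dvd_in M a b" "dvd_in M c d"
  shows "dvd_in M (a \<otimes> c) (b \<otimes> d)"
proof -
  obtain q q' where q: "q \<in> C" "b = a \<otimes> q" "q' \<in> C" "d = c \<otimes> q'" using assms unfolding dvd_in_def by blast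
  have "b \<otimes> d = (a \<otimes> c) \<otimes> (q \<otimes> q')" using q assms mul_assoc[of a q "c \<otimes> q'"] mul_left_comm[of q c q']
    mul_assoc[of a c "q \<otimes> q'"] by simp
  then show ?thesis unfolding dvd_in_def using q assms by auto
qed
lemma dvd_add: assumes "a \<in> C" "b \<in> C" "c \<in> C" "dvd_in M a b" "dvd_in M a c" shows "dvd_in M a (b \<oplus> c)"
proof -
  obtain q q' where q: "q \<in> C" "b = a \<otimes> q" "q' \<in> C" "c = a \<otimes> q'" using assms unfolding dvd_in_def by blast
  then show ?thesis unfolding dvd_in_def using distL[of a q q'] assms by (intro bexI[of _ "q \<oplus> q'"]) auto
qed
lemma dvd_0_iff: "x \<in> C \<Longrightarrow> dvd_in M Z x \<longleftrightarrow> x = Z" unfolding dvd_in_def by auto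
lemma dvd_sub:
  assumes "d \<in> C" "a \<in> C" "b \<in> C" "dvd_in M d (a \<oplus> b)" "dvd_in M d a"
  shows "dvd_in M d b"
proof (cases "d = Z")
  case True then show ?thesis using assms dvd_0_iff[of a] dvd_0_iff[of "a \<oplus> b"] dvd_0_iff[of b] by simp
next
  case False
  then have d: "Z \<prec> d" using pos_iff assms by blast
  have "md (a \<oplus> b) d = md (md a d \<oplus> b) d" using md_add assms d by blast
  then show ?thesis using assms d dvd_md[of d a] dvd_md[of d b] dvd_md[of d "a \<oplus> b"] by simp
qed
lemma dvd_le: assumes "d \<in> C" "n \<in> C" "n \<noteq> Z" "dvd_in M d n" shows "d \<preceq> n"
proof -
  obtain q where q: "q \<in> C" "n = d \<otimes> q" using assms unfolding dvd_in_def by blast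
  then have "q \<noteq> Z" using assms by auto
  then show ?thesis using le_mul[of d q] q assms pos_iff[of q] by simp
qed
lemma dvd_U: "d \<in> C \<Longrightarrow> dvd_in M d U \<Longrightarrow> d = U"
  unfolding dvd_in_def using mul_eq_1 by (metis U_C)

lemma cg_dvd:
  assumes "m \<in> C" "Z \<prec> m" "x \<in> C" "y \<in> C" "d \<in> C" "cg m x y" "dvd_in M d m" "dvd_in M d x"
  shows "dvd_in M d y"
proof -
  obtain q r where qr: "q \<in> C" "r \<in> C" "x = q \<otimes> m \<oplus> r" "r \<prec> m" "md x m = r" by (rule divE[OF assms(1-3)])
  obtain q' r' where qr': "q' \<in> C" "r' \<in> C" "y = q' \<otimes> m \<oplus> r'" "r' \<prec> m" "md y m = r'" by (rule divE[OF assms(1,2,4)])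
  have "dvd_in M d (q \<otimes> m)" using dvd_mul2[of d m q] assms qr by simp
  then have "dvd_in M d r"
    using dvd_sub[of d "q \<otimes> m" r] qr assms by simp
  then have "dvd_in M d r'" using assms cg_def qr qr' by simp
  moreover have "dvd_in M d (q' \<otimes> m)" using dvd_mul2[of d m q'] assms qr' by simp
  ultimately show ?thesis using qr' assms dvd_add[of d "q' \<otimes> m" r'] by simp
qed

lemma inverse_ex:
  assumes m: "m \<in> C" "U \<prec> m" and l: "l \<in> C" and cop: "coprime_in M l m"
  shows "\<exists>s\<in>C. md (s \<otimes> l) m = U"
proof -
  have m0: "Z \<prec> m" using m lt_trans[of Z U m] by simp
  define S where "S c \<longleftrightarrow> c \<noteq> Z \<and> (\<exists>s\<in>C. s \<preceq> m \<and> (\<exists>k\<in>C. k \<preceq> s \<otimes> l \<and> s \<otimes> l = k \<otimes> m \<oplus> c \<and> c \<prec> m))" for c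
  have S_iff: "S c \<longleftrightarrow> c \<noteq> Z \<and> (\<exists>s\<in>C. s \<preceq> m \<and> md (s \<otimes> l) m = c)" if c: "c \<in> C" for c
  proof
    assume "S c"
    then obtain s k where sk: "c \<noteq> Z" "s \<in> C" "s \<preceq> m" "k \<in> C" "s \<otimes> l = k \<otimes> m \<oplus> c" "c \<prec> m"
      unfolding S_def by blast
    then have "md (s \<otimes> l) m = c" using md_unique(1)[of m k c "s \<otimes> l"] m0 m c by simp
    then show "c \<noteq> Z \<and> (\<exists>s\<in>C. s \<preceq> m \<and> md (s \<otimes> l) m = c)" using sk by blast
  next
    assume h: "c \<noteq> Z \<and> (\<exists>s\<in>C. s \<preceq> m \<and> md (s \<otimes> l) m = c)"
    then obtain s where s: "s \<in> C" "s \<preceq> m" "md (s \<otimes> l) m = c" by blast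
    obtain k r where kr: "k \<in> C" "r \<in> C" "s \<otimes> l = k \<otimes> m \<oplus> r" "r \<prec> m" "md (s \<otimes> l) m = r"
      by (rule divE[of m "s \<otimes> l"]) (use m0 m l s in auto)
    have "k \<preceq> k \<otimes> m" using le_mul[of k m] m0 m kr by simp
    moreover have "k \<otimes> m \<preceq> s \<otimes> l" using kr le_add[of "k \<otimes> m" r] m by simp
    ultimately have "k \<preceq> s \<otimes> l" using le_trans[of k "k \<otimes> m" "s \<otimes> l"] m l s kr by simp
    then show "S c" unfolding S_def using h s kr by (intro conjI bexI[of _ s] bexI[of _ k]) auto
  qed
  let ?p = "Conjf (Negf (Eqf (V 1) Zt)) (Exf 4 (Conjf (Lef (V 4) (V 3)) (Exf 5 (Conjf (Lef (V 5) (Tt (V 4) (V 2)))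
     (Conjf (Eqf (Tt (V 4) (V 2)) (Pt (Tt (V 5) (V 3)) (V 1))) (Conjf (Lef (V 1) (V 3)) (Negf (Eqf (V 1) (V 3)))))))))"
  have dp: "delta0 ?p" by (auto intro!: delta0.intros)
  have rr: "range ((\<lambda>_. Z)(2 := l, 3 := m)) \<subseteq> C" using m l by auto
  have sat: "sat M (((\<lambda>_. Z)(2 := l, 3 := m))(0 := a, 1 := c)) ?p = S c" if "a \<in> C" "c \<in> C" for a c
    unfolding S_def by (auto simp: lt_def)
  have lm0: "md l m \<noteq> Z"
  proof
    assume "md l m = Z"
    then have "dvd_in M m l" using dvd_md[of m l] m0 m l by blast
    then have "m = U" using cop m unfolding coprime_in_def by auto
    then show False using m by simp
  qed
  have lmC: "md l m \<in> C" using md_C m0 m l by blast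
  have "U \<preceq> m" using m lt_imp_le by blast
  then have "S (md l m)" unfolding S_iff[OF lmC] using lm0 m l by (intro conjI bexI[of _ U]) auto
  then have "\<exists>c\<in>C. S c \<and> (\<forall>c'\<in>C. c' \<prec> c \<longrightarrow> \<not> S c')"
    by (intro lnp[OF dp _ rr sat lmC]) auto
  then obtain d where d: "d \<in> C" "S d" "\<forall>c'\<in>C. c' \<prec> d \<longrightarrow> \<not> S c'" by blast
  then obtain s0 where s0: "s0 \<in> C" "s0 \<preceq> m" "md (s0 \<otimes> l) m = d" "d \<noteq> Z" using S_iff by blast
  have dm: "d \<prec> m" using s0 md_lt[of m "s0 \<otimes> l"] m0 m l by simp
  have d0: "Z \<prec> d" using d s0 pos_iff by blast
  obtain m1 where m1: "m1 \<in> C" "m1 \<oplus> U = m" using lt_ex[of U m] m add_comm[of U] by auto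
  have key: "\<rho> = Z" if r: "\<rho> \<in> C" "\<rho> \<prec> d" "s \<in> C" "cg m (s \<otimes> l) \<rho>" for \<rho> s
  proof (rule ccontr)
    assume "\<rho> \<noteq> Z"
    have sm: "md s m \<in> C" "md s m \<preceq> m" using md_lt[of m s] md_C[of m s] m0 m r lt_imp_le by auto
    have "md (md s m \<otimes> l) m = md (s \<otimes> l) m" using md_mul[of m s l] m0 m l r by simp
    also have "\<dots> = md \<rho> m" using r cg_def by simp
    also have "\<dots> = \<rho>" using md_small[of m \<rho>] m0 m r dm lt_trans[of \<rho> d m] d by simp
    finally have "S \<rho>" using S_iff[of \<rho>] \<open>\<rho> \<noteq> Z\<close> r sm by blast
    then show False using d r by blast
  qed
  have dvm: "dvd_in M d m"
  proof -
    obtain q \<rho> where qr: "q \<in> C" "\<rho> \<in> C" "m = q \<otimes> d \<oplus> \<rho>" "\<rho> \<prec> d" "md m d = \<rho>"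
      by (rule divE[of d m]) (use d0 d m in auto)
    have C1: "m1 \<otimes> q \<in> C" "q \<otimes> d \<in> C" "s0 \<otimes> l \<in> C" using m1 qr d s0 l by auto
    have "cg m ((m1 \<otimes> q \<otimes> s0) \<otimes> l) ((m1 \<otimes> q) \<otimes> (s0 \<otimes> l))"
      unfolding cg_def using m1 qr s0 l mul_assoc[of "m1 \<otimes> q" s0 l] by simp
    also have "cg m \<dots> ((m1 \<otimes> q) \<otimes> d)"
    proof -
      have "cg m (s0 \<otimes> l) d" using cg_md[of m "s0 \<otimes> l"] s0 m0 m l cg_sym by auto
      then have "cg m ((s0 \<otimes> l) \<otimes> (m1 \<otimes> q)) (d \<otimes> (m1 \<otimes> q))" using cg_mul[of m "s0 \<otimes> l" d "m1 \<otimes> q"] C1 m0 m d by simp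
      then show ?thesis using mul_comm[of "s0 \<otimes> l" "m1 \<otimes> q"] mul_comm[of d "m1 \<otimes> q"] C1 d by simp
    qed
    also have "cg m ((m1 \<otimes> q) \<otimes> d) \<rho>"
    proof (rule cg_cancel[where c = "q \<otimes> d"])
      have "(m1 \<otimes> q) \<otimes> d \<oplus> q \<otimes> d = (m1 \<oplus> U) \<otimes> (q \<otimes> d)"
        using m1 qr d distR[of "q \<otimes> d" m1 U] mul_assoc[of m1 q d] by simp
      then have "(m1 \<otimes> q) \<otimes> d \<oplus> q \<otimes> d = (q \<otimes> d) \<otimes> m" using m1 qr d mul_comm[of m "q \<otimes> d"] by simp
      moreover have "\<rho> \<oplus> q \<otimes> d = U \<otimes> m" using qr m d add_comm[of \<rho> "q \<otimes> d"] by simp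
      ultimately show "cg m ((m1 \<otimes> q) \<otimes> d \<oplus> q \<otimes> d) (\<rho> \<oplus> q \<otimes> d)"
        unfolding cg_def using md_mult_self[of m "q \<otimes> d"] md_mult_self[of m U] m0 m qr d by simp
    qed (use m1 qr d m0 m in auto)
    finally have "\<rho> = Z" using key[of \<rho> "m1 \<otimes> q \<otimes> s0"] qr m1 s0 by simp
    then show ?thesis using qr mul_comm[of q d] d unfolding dvd_in_def by auto
  qed
  have dvl: "dvd_in M d l"
  proof -
    obtain q \<rho> where qr: "q \<in> C" "\<rho> \<in> C" "l = q \<otimes> d \<oplus> \<rho>" "\<rho> \<prec> d" "md l d = \<rho>"
      by (rule divE[of d l]) (use d0 d l in auto)
    have C1: "m1 \<otimes> q \<in> C" "q \<otimes> d \<in> C" "s0 \<otimes> l \<in> C" using m1 qr d s0 l by auto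
    let ?s = "U \<oplus> m1 \<otimes> q \<otimes> s0"
    have "?s \<otimes> l = l \<oplus> (m1 \<otimes> q) \<otimes> (s0 \<otimes> l)"
      using m1 qr s0 l C1 distR[of l U "m1 \<otimes> q \<otimes> s0"] mul_assoc[of "m1 \<otimes> q" s0 l] by simp
    then have "cg m (?s \<otimes> l) (l \<oplus> (m1 \<otimes> q) \<otimes> (s0 \<otimes> l))" unfolding cg_def by simp
    also have "cg m (l \<oplus> (m1 \<otimes> q) \<otimes> (s0 \<otimes> l)) (l \<oplus> (m1 \<otimes> q) \<otimes> d)"
    proof -
      have "cg m (s0 \<otimes> l) d" using cg_md[of m "s0 \<otimes> l"] s0 m0 m l cg_sym by auto
      then have "cg m ((s0 \<otimes> l) \<otimes> (m1 \<otimes> q)) (d \<otimes> (m1 \<otimes> q))" using cg_mul[of m "s0 \<otimes> l" d "m1 \<otimes> q"] C1 m0 m d by simp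
      then have "cg m ((m1 \<otimes> q) \<otimes> (s0 \<otimes> l)) ((m1 \<otimes> q) \<otimes> d)"
        using mul_comm[of "s0 \<otimes> l" "m1 \<otimes> q"] mul_comm[of d "m1 \<otimes> q"] C1 d by simp
      then have "cg m ((m1 \<otimes> q) \<otimes> (s0 \<otimes> l) \<oplus> l) ((m1 \<otimes> q) \<otimes> d \<oplus> l)"
        using cg_add[of m _ _ l] C1 m0 m d l by simp
      then show ?thesis using add_comm[of l "(m1 \<otimes> q) \<otimes> (s0 \<otimes> l)"] add_comm[of l "(m1 \<otimes> q) \<otimes> d"] C1 l d by simp
    qed
    also have "cg m (l \<oplus> (m1 \<otimes> q) \<otimes> d) \<rho>"
    proof (rule cg_cancel[where c = "q \<otimes> d"])
      have "(m1 \<otimes> q) \<otimes> d \<oplus> q \<otimes> d = (q \<otimes> d) \<otimes> m"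
        using m1 qr d m distR[of "q \<otimes> d" m1 U] mul_assoc[of m1 q d] mul_comm[of m "q \<otimes> d"] by simp
      then have "l \<oplus> (m1 \<otimes> q) \<otimes> d \<oplus> q \<otimes> d = l \<oplus> (q \<otimes> d) \<otimes> m"
        using add_assoc[of l "(m1 \<otimes> q) \<otimes> d" "q \<otimes> d"] C1 l d by simp
      then have "cg m (l \<oplus> (m1 \<otimes> q) \<otimes> d \<oplus> q \<otimes> d) l"
        unfolding cg_def using md_add_mult[of m l "q \<otimes> d"] m0 m qr d l by simp
      moreover have "\<rho> \<oplus> q \<otimes> d = l" using qr add_comm[of \<rho> "q \<otimes> d"] d by simp
      ultimately show "cg m (l \<oplus> (m1 \<otimes> q) \<otimes> d \<oplus> q \<otimes> d) (\<rho> \<oplus> q \<otimes> d)" by simp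
    qed (use m1 qr d m0 m l in auto)
    finally have "\<rho> = Z" using key[of \<rho> ?s] qr m1 s0 by simp
    then show ?thesis using qr mul_comm[of q d] d unfolding dvd_in_def by auto
  qed
  have "d = U" using cop dvm dvl d unfolding coprime_in_def by blast
  then show ?thesis using s0 by blast
qed

end


context isig begin

lemma coprime_sym: "coprime_in M a b \<Longrightarrow> coprime_in M b a" unfolding coprime_in_def by blast

lemma prime_C_gt: "prime_in M p \<Longrightarrow> U \<prec> p" unfolding prime_in_def by blast

lemma prime_cop:
  assumes "prime_in M p" "p \<in> C" "a \<in> C" "\<not> dvd_in M p a"
  shows "coprime_in M a p"
  unfolding coprime_in_def
proof (intro ballI impI)
  fix d assume d: "d \<in> C" "dvd_in M d a \<and> dvd_in M d p"
  then have "d = U \<or> d = p" using assms(1) unfolding prime_in_def by blast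
  then show "d = U" using d assms(4) by blast
qed

lemma euclid:
  assumes p: "prime_in M p" "p \<in> C" and ab: "a \<in> C" "b \<in> C" "dvd_in M p (a \<otimes> b)" "\<not> dvd_in M p a"
  shows "dvd_in M p b"
proof -
  have p1: "U \<prec> p" using p prime_C_gt by blast
  then have p0: "Z \<prec> p" using lt_trans[of Z U p] p by simp
  obtain s where s: "s \<in> C" "md (s \<otimes> a) p = U" using inverse_ex[OF p(2) p1 ab(1) prime_cop[OF p ab(1,4)]] by blast
  have "md ((s \<otimes> a) \<otimes> b) p = md (md (s \<otimes> a) p \<otimes> b) p" using md_mul[of p "s \<otimes> a" b] p0 p s ab by simp
  also have "\<dots> = md b p" using s ab by simp
  finally have 1: "md ((s \<otimes> a) \<otimes> b) p = md b p" .
  have "(s \<otimes> a) \<otimes> b = (a \<otimes> b) \<otimes> s" using s ab mul_assoc[of s a b] mul_comm[of s "a \<otimes> b"] by simp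
  moreover have "md ((a \<otimes> b) \<otimes> s) p = md (md (a \<otimes> b) p \<otimes> s) p" using md_mul[of p "a \<otimes> b" s] p0 p s ab by simp
  moreover have "md (a \<otimes> b) p = Z" using dvd_md[of p "a \<otimes> b"] p0 p ab by simp
  ultimately have "md b p = md Z p" using 1 s by simp
  then have "md b p = Z" using md_small[of p Z] p0 p by simp
  then show ?thesis using dvd_md[of p b] p0 p ab by simp
qed

lemma coprime_U: "a \<in> C \<Longrightarrow> coprime_in M a U" unfolding coprime_in_def using dvd_U by blast

lemma coprime_mul:
  assumes C: "u \<in> C" "v \<in> C" "w \<in> C" and cu: "coprime_in M u w" and cv: "coprime_in M v w"
  shows "coprime_in M (u \<otimes> v) w"
proof (cases "w = Z")
  case True
  have "u = U" using cu True C unfolding coprime_in_def by auto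
  then show ?thesis using cv C by simp
next
  case False
  then consider "w = U" | "U \<prec> w" using C pos_iff[of w] lt_succ_le[of Z w] le_iff[of U w] by auto
  then show ?thesis
  proof cases
    case 1 then show ?thesis using coprime_U C by simp
  next
    case 2
    have w0: "Z \<prec> w" using 2 lt_trans[of Z U w] C by simp
    obtain s where s: "s \<in> C" "md (s \<otimes> u) w = U" using inverse_ex[OF C(3) 2 C(1) cu] by blast
    show ?thesis unfolding coprime_in_def
    proof (intro ballI impI)
      fix d assume d: "d \<in> C" "dvd_in M d (u \<otimes> v) \<and> dvd_in M d w"
      have "md ((s \<otimes> u) \<otimes> v) w = md (md (s \<otimes> u) w \<otimes> v) w" using md_mul[of w "s \<otimes> u" v] w0 C s by simp
      then have "cg w ((s \<otimes> u) \<otimes> v) v" unfolding cg_def using s C by simp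
      moreover have "dvd_in M d ((s \<otimes> u) \<otimes> v)"
        using dvd_mul2[of d "u \<otimes> v" s] d C s mul_assoc[of s u v] by simp
      ultimately have "dvd_in M d v" using cg_dvd[of w "(s \<otimes> u) \<otimes> v" v d] w0 C s d by simp
      then show "d = U" using cv d unfolding coprime_in_def by blast
    qed
  qed
qed

definition mo where "mo b j = U \<oplus> (j \<oplus> U) \<otimes> b"

lemma mo_C[simp]: "b \<in> C \<Longrightarrow> j \<in> C \<Longrightarrow> mo b j \<in> C" unfolding mo_def by simp
lemma mo_gt1: assumes "b \<in> C" "j \<in> C" "Z \<prec> b" shows "U \<prec> mo b j"
proof -
  have "Z \<prec> (j \<oplus> U) \<otimes> b" using mul_pos[of "j \<oplus> U" b] assms lt_succ[of j] le_lt_trans[of Z j "j \<oplus> U"] by simp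
  then show ?thesis unfolding mo_def using add_lt_mono_iff2[of Z "(j \<oplus> U) \<otimes> b" U] assms by simp
qed
lemma mo_pos: "b \<in> C \<Longrightarrow> j \<in> C \<Longrightarrow> Z \<prec> b \<Longrightarrow> Z \<prec> mo b j"
  using mo_gt1 lt_trans[of Z U] by (meson U_C Z_C Z_lt_U mo_C)

lemma beta_iff: assumes "a \<in> C" "b \<in> C" "i \<in> C" "v \<in> C" "Z \<prec> b"
  shows "beta_in M a b i v \<longleftrightarrow> v = md a (mo b i)"
proof -
  have m: "mo b i \<in> C" "Z \<prec> mo b i" using mo_pos assms by auto
  have "beta_in M a b i v \<longleftrightarrow> v \<prec> mo b i \<and> (\<exists>q\<in>C. a = q \<otimes> mo b i \<oplus> v)"
    unfolding beta_in_def mo_def Let_def by (simp add: add_comm)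
  also have "\<dots> \<longleftrightarrow> v = md a (mo b i)"
  proof
    assume "v \<prec> mo b i \<and> (\<exists>q\<in>C. a = q \<otimes> mo b i \<oplus> v)"
    then show "v = md a (mo b i)" using md_unique(1)[of "mo b i"] m assms by metis
  next
    assume "v = md a (mo b i)"
    then show "v \<prec> mo b i \<and> (\<exists>q\<in>C. a = q \<otimes> mo b i \<oplus> v)" using divmod[of "mo b i" a] m assms by auto
  qed
  finally show ?thesis .
qed

definition divall where "divall b N \<longleftrightarrow> (\<forall>t\<in>C. Z \<prec> t \<longrightarrow> t \<preceq> N \<longrightarrow> dvd_in M t b)"

lemma mo_coprime:
  assumes C: "b \<in> C" "N \<in> C" "j \<in> C" "k \<in> C" and b0: "Z \<prec> b" and dv: "divall b N"
    and jk: "j \<prec> k" "k \<preceq> N"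
  shows "coprime_in M (mo b j) (mo b k)"
  unfolding coprime_in_def
proof (intro ballI impI)
  fix d assume d: "d \<in> C" "dvd_in M d (mo b j) \<and> dvd_in M d (mo b k)"
  obtain \<delta> where de: "\<delta> \<in> C" "j \<oplus> \<delta> = k" using lt_ex[of j k] C jk by auto
  have d0: "\<delta> \<noteq> Z" using de jk C by auto
  have "(k \<oplus> U) \<otimes> mo b j = (j \<oplus> U) \<otimes> mo b k \<oplus> \<delta>"
  proof -
    have "k \<oplus> U = (j \<oplus> U) \<oplus> \<delta>" using de C add_assoc[of j \<delta> U] add_assoc[of j U \<delta>] add_comm[of \<delta> U] by simp
    then have "(k \<oplus> U) \<otimes> mo b j = ((j \<oplus> U) \<oplus> \<delta>) \<oplus> (k \<oplus> U) \<otimes> ((j \<oplus> U) \<otimes> b)"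
      unfolding mo_def using distL[of "k \<oplus> U" U "(j \<oplus> U) \<otimes> b"] C de by simp
    also have "\<dots> = (j \<oplus> U) \<oplus> (j \<oplus> U) \<otimes> ((k \<oplus> U) \<otimes> b) \<oplus> \<delta>"
      using C de add_assoc[of "j \<oplus> U" \<delta>] add_comm[of \<delta>] add_assoc[of "j \<oplus> U"] mul_left_comm[of "k \<oplus> U" "j \<oplus> U" b]
      by simp
    also have "\<dots> = (j \<oplus> U) \<otimes> mo b k \<oplus> \<delta>" unfolding mo_def using distL[of "j \<oplus> U" U "(k \<oplus> U) \<otimes> b"] C by simp
    finally show ?thesis .
  qed
  moreover have "dvd_in M d ((k \<oplus> U) \<otimes> mo b j)" using dvd_mul2[of d "mo b j" "k \<oplus> U"] d C by simp
  moreover have "dvd_in M d ((j \<oplus> U) \<otimes> mo b k)" using dvd_mul2[of d "mo b k" "j \<oplus> U"] d C by simp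
  ultimately have "dvd_in M d \<delta>" using dvd_sub[of d "(j \<oplus> U) \<otimes> mo b k" \<delta>] d C de by simp
  moreover have "\<delta> \<preceq> N" using le_add2[of \<delta> j] de C jk le_trans[of \<delta> k N] by simp
  then have "dvd_in M \<delta> b" using dv d0 de pos_iff[of \<delta>] unfolding divall_def by blast
  ultimately have "dvd_in M d b" using dvd_trans[of d \<delta> b] d de C by simp
  then have "dvd_in M d ((j \<oplus> U) \<otimes> b)" using dvd_mul2[of d b "j \<oplus> U"] d C by simp
  then have "dvd_in M d U" using dvd_sub[of d "(j \<oplus> U) \<otimes> b" U] add_comm[of U "(j \<oplus> U) \<otimes> b"] d C unfolding mo_def by simp
  then show "d = U" using dvd_U d by blast
qed


lemma ext_code:
  assumes C: "b \<in> C" "N \<in> C" "i \<in> C" "a \<in> C" "L \<in> C" "w \<in> C"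
    and b0: "Z \<prec> b" and iN: "i \<prec> N"
    and Ldv: "\<forall>j\<in>C. j \<preceq> i \<longrightarrow> dvd_in M (mo b j) L"
    and Lcop: "\<forall>k\<in>C. i \<prec> k \<longrightarrow> k \<preceq> N \<longrightarrow> coprime_in M L (mo b k)"
    and w: "w \<prec> mo b (i \<oplus> U)"
  shows "\<exists>a'\<in>C. (\<forall>j\<in>C. j \<preceq> i \<longrightarrow> md a' (mo b j) = md a (mo b j)) \<and> md a' (mo b (i \<oplus> U)) = w"
proof -
  let ?m = "mo b (i \<oplus> U)"
  have m: "?m \<in> C" "U \<prec> ?m" "Z \<prec> ?m" using mo_gt1[of b "i \<oplus> U"] mo_pos[of b "i \<oplus> U"] C b0 by auto
  have "i \<oplus> U \<preceq> N" using iN lt_succ_le C by blast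
  then have "coprime_in M L ?m" using Lcop lt_succ[of i] C by simp
  then obtain s where s: "s \<in> C" "md (s \<otimes> L) ?m = U" using inverse_ex[of ?m L] m C by blast
  obtain q c where qc: "q \<in> C" "c \<in> C" "a = q \<otimes> ?m \<oplus> c" "c \<prec> ?m" "md a ?m = c" by (rule divE[of ?m a]) (use m C in auto)
  obtain t where t: "t \<in> C" "c \<oplus> t = ?m" using lt_ex[of c ?m] qc m by auto
  define \<delta> where "\<delta> = w \<oplus> t"
  have dC: "\<delta> \<in> C" unfolding \<delta>_def using C t by simp
  define a' where "a' = a \<oplus> (s \<otimes> \<delta>) \<otimes> L"
  have a'C: "a' \<in> C" unfolding a'_def using C s dC by simp
  have old: "md a' (mo b j) = md a (mo b j)" if j: "j \<in> C" "j \<preceq> i" for j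
  proof -
    obtain h where h: "h \<in> C" "L = mo b j \<otimes> h" using Ldv j unfolding dvd_in_def by blast
    have "(s \<otimes> \<delta>) \<otimes> L = ((s \<otimes> \<delta>) \<otimes> h) \<otimes> mo b j"
      using h s dC C j mul_assoc[of "s \<otimes> \<delta>" h "mo b j"] mul_comm[of h "mo b j"] by simp
    then show ?thesis unfolding a'_def using md_add_mult[of "mo b j" a "(s \<otimes> \<delta>) \<otimes> L"] md_add_mult[of "mo b j" a "(s \<otimes> \<delta>) \<otimes> h"]
      mo_pos[of b j] C j s dC h b0 by simp
  qed
  have new: "md a' ?m = w"
  proof -
    have "cg ?m (s \<otimes> L) U" unfolding cg_def using s md_small[of ?m U] m by simp
    then have "cg ?m ((s \<otimes> L) \<otimes> \<delta>) (U \<otimes> \<delta>)" using cg_mul[of ?m "s \<otimes> L" U \<delta>] m s C dC by simp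
    moreover have "(s \<otimes> L) \<otimes> \<delta> = (s \<otimes> \<delta>) \<otimes> L" using s C dC mul_assoc[of s L \<delta>] mul_assoc[of s \<delta> L] mul_comm[of L \<delta>] by simp
    ultimately have "cg ?m ((s \<otimes> \<delta>) \<otimes> L) \<delta>" using dC by simp
    then have "cg ?m ((s \<otimes> \<delta>) \<otimes> L \<oplus> a) (\<delta> \<oplus> a)" using cg_add[of ?m _ \<delta> a] m s C dC by simp
    then have "cg ?m a' (\<delta> \<oplus> a)" unfolding a'_def using add_comm[of a "(s \<otimes> \<delta>) \<otimes> L"] s C dC by simp
    moreover have "\<delta> \<oplus> a = w \<oplus> (q \<oplus> U) \<otimes> ?m"
    proof -
      have "\<delta> \<oplus> a = w \<oplus> (t \<oplus> (q \<otimes> ?m \<oplus> c))" unfolding \<delta>_def using qc C t add_assoc[of w t a] by simp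
      also have "t \<oplus> (q \<otimes> ?m \<oplus> c) = q \<otimes> ?m \<oplus> (c \<oplus> t)"
        using qc t m add_comm[of t "q \<otimes> ?m \<oplus> c"] add_assoc[of "q \<otimes> ?m" c t] by simp
      also have "\<dots> = (q \<oplus> U) \<otimes> ?m" using t m qc distR[of ?m q U] by simp
      finally show ?thesis .
    qed
    ultimately have "cg ?m a' (w \<oplus> (q \<oplus> U) \<otimes> ?m)" by simp
    then have "md a' ?m = md w ?m" unfolding cg_def using md_add_mult[of ?m w "q \<oplus> U"] m C qc by simp
    then show ?thesis using md_small[of ?m w] m C w by simp
  qed
  show ?thesis using a'C old new by blast
qed

lemma ext_L:
  assumes C: "b \<in> C" "N \<in> C" "i \<in> C" "L \<in> C"
    and b0: "Z \<prec> b" and iN: "i \<prec> N" and dv: "divall b N" and L0: "Z \<prec> L"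
    and Ldv: "\<forall>j\<in>C. j \<preceq> i \<longrightarrow> dvd_in M (mo b j) L"
    and Lcop: "\<forall>k\<in>C. i \<prec> k \<longrightarrow> k \<preceq> N \<longrightarrow> coprime_in M L (mo b k)"
  shows "Z \<prec> L \<otimes> mo b (i \<oplus> U)"
    "\<forall>j\<in>C. j \<preceq> i \<oplus> U \<longrightarrow> dvd_in M (mo b j) (L \<otimes> mo b (i \<oplus> U))"
    "\<forall>k\<in>C. i \<oplus> U \<prec> k \<longrightarrow> k \<preceq> N \<longrightarrow> coprime_in M (L \<otimes> mo b (i \<oplus> U)) (mo b k)"
proof -
  let ?m = "mo b (i \<oplus> U)"
  have m: "?m \<in> C" "Z \<prec> ?m" using mo_pos[of b "i \<oplus> U"] C b0 by auto
  show "Z \<prec> L \<otimes> ?m" using mul_pos[of L ?m] m C L0 by simp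
  show "\<forall>j\<in>C. j \<preceq> i \<oplus> U \<longrightarrow> dvd_in M (mo b j) (L \<otimes> ?m)"
  proof (intro ballI impI)
    fix j assume j: "j \<in> C" "j \<preceq> i \<oplus> U"
    then have "j \<preceq> i \<or> j = i \<oplus> U" using le_iff[of j "i \<oplus> U"] le_succ_iff[of j i] C by auto
    then show "dvd_in M (mo b j) (L \<otimes> ?m)"
      using Ldv j dvd_mul[of "mo b j" L ?m] dvd_mulL[of ?m L] C m by auto
  qed
  show "\<forall>k\<in>C. i \<oplus> U \<prec> k \<longrightarrow> k \<preceq> N \<longrightarrow> coprime_in M (L \<otimes> ?m) (mo b k)"
  proof (intro ballI impI)
    fix k assume k: "k \<in> C" "i \<oplus> U \<prec> k" "k \<preceq> N"
    have ik: "i \<prec> k" using lt_trans[of i "i \<oplus> U" k] lt_succ[of i] k C by simp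
    have "coprime_in M ?m (mo b k)" using mo_coprime[of b N "i \<oplus> U" k] C k b0 dv by simp
    then show "coprime_in M (L \<otimes> ?m) (mo b k)" using coprime_mul[of L ?m "mo b k"] Lcop ik k C m b0 by simp
  qed
qed

lemma divall_ex: assumes "N \<in> C" shows "\<exists>b\<in>C. Z \<prec> b \<and> divall b N"
proof -
  let ?p = "Exf 1 (Conjf (Negf (Eqf (V 1) Zt)) (Allf 2 (Impf (Lef (V 2) (V 0)) (Impf (Negf (Eqf (V 2) Zt))
              (Exf 3 (Conjf (Lef (V 3) (V 1)) (Eqf (V 1) (Tt (V 2) (V 3)))))))))"
  let ?Q = "\<lambda>N. \<exists>b\<in>C. b \<noteq> Z \<and> (\<forall>t\<in>C. t \<preceq> N \<longrightarrow> t \<noteq> Z \<longrightarrow> (\<exists>q\<in>C. q \<preceq> b \<and> b = t \<otimes> q))"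
  have d: "sigma1 ?p" by (auto intro!: sigma1.intros delta0.intros)
  have r: "range (\<lambda>_. Z) \<subseteq> C" by auto
  have sat: "\<And>a. a \<in> C \<Longrightarrow> sat M ((\<lambda>_. Z)(0 := a)) ?p = ?Q a" by auto
  have "\<forall>t\<in>C. t \<preceq> Z \<longrightarrow> t = Z" using le_antisym[of _ Z] by auto
  then have base: "?Q Z" by (intro bexI[of _ U]) auto
  have step: "?Q (a \<oplus> U)" if a: "a \<in> C" "?Q a" for a
  proof -
    obtain b where b: "b \<in> C" "b \<noteq> Z" "\<forall>t\<in>C. t \<preceq> a \<longrightarrow> t \<noteq> Z \<longrightarrow> (\<exists>q\<in>C. q \<preceq> b \<and> b = t \<otimes> q)" using a by blast
    let ?b = "b \<otimes> (a \<oplus> U)"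
    have bC: "?b \<in> C" using a b by simp
    have "Z \<prec> a \<oplus> U" using lt_succ[of a] Z_le[of a] le_lt_trans[of Z a "a \<oplus> U"] a by simp
    then have "a \<oplus> U \<noteq> Z" by auto
    then have b0: "?b \<noteq> Z" using mul_eq_0[of b "a \<oplus> U"] a b by auto
    show ?thesis
    proof (rule bexI[of _ ?b], intro conjI ballI impI)
      fix t assume t: "t \<in> C" "t \<preceq> a \<oplus> U" "t \<noteq> Z"
      have "dvd_in M t ?b"
      proof (cases "t = a \<oplus> U")
        case True then show ?thesis using dvd_mulL[of t b] t b by simp
      next
        case False
        then have "t \<preceq> a" using t le_iff[of t "a \<oplus> U"] le_succ_iff[of t a] a by simp
        then obtain q where "q \<in> C" "b = t \<otimes> q" using b t by blast
        then show ?thesis using dvd_mul[of t b "a \<oplus> U"] dvd_mulR[of t q] t a b by simp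
      qed
      then obtain q where q: "q \<in> C" "?b = t \<otimes> q" unfolding dvd_in_def by blast
      then have "q \<noteq> Z" using b0 t by auto
      then have "q \<preceq> ?b" using le_mul[of q t] q t pos_iff mul_comm[of t q] by simp
      then show "\<exists>q\<in>C. q \<preceq> ?b \<and> ?b = t \<otimes> q" using q by blast
    qed (use bC b0 in auto)
  qed
  have "?Q N" by (rule sig_ind[OF d r sat base step assms])
  then obtain b where b: "b \<in> C" "b \<noteq> Z" "\<forall>t\<in>C. t \<preceq> N \<longrightarrow> t \<noteq> Z \<longrightarrow> (\<exists>q\<in>C. q \<preceq> b \<and> b = t \<otimes> q)" by blast
  have "divall b N" unfolding divall_def dvd_in_def using b pos_iff by blast
  then show ?thesis using b pos_iff by blast
qed

lemma divall_ex2: assumes "N \<in> C" "D \<in> C" "Z \<prec> D" shows "\<exists>b\<in>C. Z \<prec> b \<and> D \<preceq> b \<and> divall b N"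
proof -
  obtain b where b: "b \<in> C" "Z \<prec> b" "divall b N" using divall_ex assms by blast
  have "divall (b \<otimes> D) N" using b assms dvd_mul unfolding divall_def by blast
  moreover have "D \<preceq> b \<otimes> D" using le_mul[of D b] b assms mul_comm[of D b] by simp
  moreover have "Z \<prec> b \<otimes> D" using mul_pos b assms by blast
  ultimately show ?thesis using b assms by (intro bexI[of _ "b \<otimes> D"]) auto
qed

end



definition fdvd :: "nat \<Rightarrow> trm \<Rightarrow> trm \<Rightarrow> fm" where
  "fdvd q s t = Exf q (Conjf (Lef (V q) t) (Eqf t (Tt s (V q))))"
definition fprime :: "nat \<Rightarrow> nat \<Rightarrow> trm \<Rightarrow> fm" where
  "fprime d q t = Conjf (Conjf (Lef Ot t) (Negf (Eqf Ot t)))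
     (Allf d (Impf (Lef (V d) t) (Impf (fdvd q (V d) t) (Disjf (Eqf (V d) Ot) (Eqf (V d) t)))))"
definition fcop :: "nat \<Rightarrow> nat \<Rightarrow> trm \<Rightarrow> trm \<Rightarrow> fm" where
  "fcop d q s t = Allf d (Impf (Lef (V d) s) (Impf (Conjf (fdvd q (V d) s) (fdvd q (V d) t)) (Eqf (V d) Ot)))"
definition fbeta :: "nat \<Rightarrow> trm \<Rightarrow> trm \<Rightarrow> trm \<Rightarrow> trm \<Rightarrow> fm" where
  "fbeta q a b j w = Conjf (Conjf (Lef w (Pt Ot (Tt (Pt j Ot) b))) (Negf (Eqf w (Pt Ot (Tt (Pt j Ot) b)))))
     (Exf q (Conjf (Lef (V q) a) (Eqf a (Pt (Tt (V q) (Pt Ot (Tt (Pt j Ot) b))) w))))"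

lemma ev_upd[simp]: "q \<notin> tvars s \<Longrightarrow> ev M (r(q := c)) s = ev M r s"
  by (induct s) auto

lemma delta0_fdvd[intro]: "q \<notin> tvars t \<Longrightarrow> delta0 (fdvd q s t)"
  unfolding fdvd_def by (auto intro!: delta0.intros)
lemma delta0_fprime[intro]: "d \<notin> tvars t \<Longrightarrow> q \<notin> tvars t \<Longrightarrow> delta0 (fprime d q t)"
  unfolding fprime_def by (auto intro!: delta0.intros)
lemma delta0_fcop[intro]: "d \<notin> tvars s \<Longrightarrow> q \<notin> tvars s \<Longrightarrow> q \<notin> tvars t \<Longrightarrow> delta0 (fcop d q s t)"
  unfolding fcop_def by (auto intro!: delta0.intros)
lemma delta0_fbeta[intro]: "q \<notin> tvars a \<Longrightarrow> delta0 (fbeta q a b j w)"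
  unfolding fbeta_def by (auto intro!: delta0.intros)

context isig begin

definition bdvd where "bdvd x y \<longleftrightarrow> (\<exists>c\<in>C. c \<preceq> y \<and> y = x \<otimes> c)"
definition bprime where "bprime x \<longleftrightarrow> U \<prec> x \<and> (\<forall>c\<in>C. c \<preceq> x \<longrightarrow> bdvd c x \<longrightarrow> c = U \<or> c = x)"
definition bcop where "bcop x y \<longleftrightarrow> (\<forall>c\<in>C. c \<preceq> x \<longrightarrow> bdvd c x \<longrightarrow> bdvd c y \<longrightarrow> c = U)"
definition bbeta where "bbeta a b j w \<longleftrightarrow> w \<prec> mo b j \<and> (\<exists>c\<in>C. c \<preceq> a \<and> a = c \<otimes> mo b j \<oplus> w)"

lemma sat_fdvd[simp]: "q \<notin> tvars s \<Longrightarrow> q \<notin> tvars t \<Longrightarrow> sat M r (fdvd q s t) = bdvd (ev M r s) (ev M r t)"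
  unfolding fdvd_def bdvd_def by simp
lemma sat_fprime[simp]: "d \<noteq> q \<Longrightarrow> d \<notin> tvars t \<Longrightarrow> q \<notin> tvars t \<Longrightarrow> sat M r (fprime d q t) = bprime (ev M r t)"
  unfolding fprime_def bprime_def by (simp add: lt_def)
lemma sat_fcop[simp]: "d \<noteq> q \<Longrightarrow> d \<notin> tvars s \<Longrightarrow> q \<notin> tvars s \<Longrightarrow> d \<notin> tvars t \<Longrightarrow> q \<notin> tvars t \<Longrightarrow>
    sat M r (fcop d q s t) = bcop (ev M r s) (ev M r t)"
  unfolding fcop_def bcop_def by auto
lemma sat_fbeta[simp]: "q \<notin> tvars a \<Longrightarrow> q \<notin> tvars b \<Longrightarrow> q \<notin> tvars j \<Longrightarrow> q \<notin> tvars w \<Longrightarrow>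
    sat M r (fbeta q a b j w) = bbeta (ev M r a) (ev M r b) (ev M r j) (ev M r w)"
  unfolding fbeta_def bbeta_def mo_def by (simp add: lt_def)

lemma bdvd_iff[simp]: assumes "x \<in> C" "y \<in> C" shows "bdvd x y = dvd_in M x y"
proof
  assume "bdvd x y" then show "dvd_in M x y" unfolding bdvd_def dvd_in_def by blast
next
  assume "dvd_in M x y"
  then obtain c where c: "c \<in> C" "y = x \<otimes> c" unfolding dvd_in_def by blast
  show "bdvd x y"
  proof (cases "y = Z")
    case True then show ?thesis unfolding bdvd_def using assms by (intro bexI[of _ Z]) auto
  next
    case False
    then have "x \<noteq> Z" "c \<noteq> Z" using c assms by auto
    then have "c \<preceq> y" using le_mul[of c x] c assms pos_iff[of x] mul_comm[of c x] by simp
    then show ?thesis unfolding bdvd_def using c by blast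
  qed
qed

lemma bprime_iff[simp]: assumes "x \<in> C" shows "bprime x = prime_in M x"
proof -
  have "U \<prec> x \<Longrightarrow> x \<noteq> Z" using assms lt_asym[of Z x] lt_trans[of Z U x] by auto
  then show ?thesis unfolding bprime_def prime_in_def using assms dvd_le[of _ x] by auto
qed

lemma bcop_iff[simp]: assumes "x \<in> C" "y \<in> C" "x \<noteq> Z" shows "bcop x y = coprime_in M x y"
  unfolding bcop_def coprime_in_def using assms dvd_le[of _ x] by auto

lemma md_le[simp]: "m \<in> C \<Longrightarrow> Z \<prec> m \<Longrightarrow> a \<in> C \<Longrightarrow> md a m \<preceq> a"
proof -
  assume a: "m \<in> C" "Z \<prec> m" "a \<in> C"
  obtain q r where qr: "q \<in> C" "r \<in> C" "a = q \<otimes> m \<oplus> r" "r \<prec> m" "md a m = r" by (rule divE[OF a])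
  then show ?thesis using le_add2[of r "q \<otimes> m"] a by simp
qed

lemma bbeta_iff[simp]: assumes "a \<in> C" "b \<in> C" "j \<in> C" "w \<in> C" "Z \<prec> b"
  shows "bbeta a b j w = (w = md a (mo b j))"
proof -
  have m: "mo b j \<in> C" "Z \<prec> mo b j" using mo_pos[of b j] assms by auto
  show ?thesis
  proof
    assume "bbeta a b j w"
    then obtain c where "c \<in> C" "a = c \<otimes> mo b j \<oplus> w" "w \<prec> mo b j" unfolding bbeta_def by blast
    then show "w = md a (mo b j)" using md_unique(1)[of "mo b j" c w a] m assms by simp
  next
    assume w: "w = md a (mo b j)"
    obtain q r where qr: "q \<in> C" "r \<in> C" "a = q \<otimes> mo b j \<oplus> r" "r \<prec> mo b j" "md a (mo b j) = r"
      by (rule divE[of "mo b j" a]) (use m assms in auto)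
    have "q \<preceq> q \<otimes> mo b j" using le_mul[of q "mo b j"] qr m by simp
    moreover have "q \<otimes> mo b j \<preceq> a" using qr le_add[of "q \<otimes> mo b j" r] m by simp
    ultimately have "q \<preceq> a" using le_trans[of q "q \<otimes> mo b j" a] qr m assms by simp
    then show "bbeta a b j w" unfolding bbeta_def using qr w by (intro conjI bexI[of _ q]) auto
  qed
qed

end

context isig begin

definition fstep where "fstep N j w = (if prime_in M (j \<oplus> U) \<and> dvd_in M (j \<oplus> U) N then w \<otimes> (j \<oplus> U) else w)"
definition rinv where "rinv D j w \<longleftrightarrow> dvd_in M w D \<and> (\<forall>p\<in>C. prime_in M p \<and> dvd_in M p w \<longrightarrow> p \<preceq> j)"
definition RC where "RC N D b i a L \<longleftrightarrow> U = md a (mo b Z) \<and>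
   (\<forall>j\<in>C. j \<preceq> i \<longrightarrow> j \<noteq> i \<longrightarrow>
      (prime_in M (j \<oplus> U) \<and> dvd_in M (j \<oplus> U) N \<longrightarrow> md a (mo b j) \<otimes> (j \<oplus> U) = md a (mo b (j \<oplus> U))) \<and>
      (\<not> (prime_in M (j \<oplus> U) \<and> dvd_in M (j \<oplus> U) N) \<longrightarrow> md a (mo b j) = md a (mo b (j \<oplus> U)))) \<and>
   (\<forall>j\<in>C. j \<preceq> i \<longrightarrow> rinv D j (md a (mo b j))) \<and> Z \<noteq> L \<and>
   (\<forall>j\<in>C. j \<preceq> i \<longrightarrow> dvd_in M (mo b j) L) \<and>
   (\<forall>k\<in>C. k \<preceq> N \<longrightarrow> i \<prec> k \<longrightarrow> coprime_in M L (mo b k))"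

definition RCb where "RCb N D b i a L \<longleftrightarrow> U = md a (mo b Z) \<and>
   (\<forall>j\<in>C. j \<preceq> i \<longrightarrow> j \<noteq> i \<longrightarrow>
      (prime_in M (j \<oplus> U) \<and> dvd_in M (j \<oplus> U) N \<longrightarrow> md a (mo b j) \<otimes> (j \<oplus> U) = md a (mo b (j \<oplus> U))) \<and>
      (\<not> (prime_in M (j \<oplus> U) \<and> dvd_in M (j \<oplus> U) N) \<longrightarrow> md a (mo b j) = md a (mo b (j \<oplus> U)))) \<and>
   (\<forall>j\<in>C. j \<preceq> i \<longrightarrow> dvd_in M (md a (mo b j)) D \<and>
       (\<forall>p\<in>C. p \<preceq> md a (mo b j) \<longrightarrow> prime_in M p \<and> dvd_in M p (md a (mo b j)) \<longrightarrow> p \<preceq> j)) \<and> Z \<noteq> L \<and>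
   (\<forall>j\<in>C. j \<preceq> i \<longrightarrow> dvd_in M (mo b j) L) \<and>
   (\<forall>k\<in>C. k \<preceq> N \<longrightarrow> i \<prec> k \<longrightarrow> bcop L (mo b k))"

lemma RCb_iff:
  assumes C: "N \<in> C" "D \<in> C" "b \<in> C" "i \<in> C" "a \<in> C" "L \<in> C" and b0: "Z \<prec> b" and D0: "D \<noteq> Z"
  shows "RCb N D b i a L = RC N D b i a L"
proof -
  have mo: "\<And>j. j \<in> C \<Longrightarrow> mo b j \<in> C \<and> Z \<prec> mo b j" using mo_pos C b0 by auto
  have 1: "(dvd_in M w D \<and> (\<forall>p\<in>C. p \<preceq> w \<longrightarrow> prime_in M p \<and> dvd_in M p w \<longrightarrow> p \<preceq> j)) =
         rinv D j w" if "w \<in> C" for w j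
  proof -
    have "dvd_in M w D \<Longrightarrow> w \<noteq> Z" using dvd_0_iff[of D] D0 C by auto
    then show ?thesis unfolding rinv_def using dvd_le[of _ w] that by auto
  qed
  have 2: "Z \<noteq> L \<Longrightarrow> bcop L (mo b k) = coprime_in M L (mo b k)" if "k \<in> C" for k
    using bcop_iff[of L "mo b k"] C mo that by auto
  show ?thesis unfolding RCb_def RC_def using 1 2 C mo by (auto simp del: bcop_iff)
qed

lemma ball_eq_le[simp]: "t \<in> C \<Longrightarrow> t \<preceq> a \<Longrightarrow> (\<forall>w\<in>C. w \<preceq> a \<longrightarrow> w = t \<longrightarrow> P w) = P t"
  by auto

abbreviation "PsiB \<equiv> Conjf (fbeta 8 (V 4) (V 3) Zt Ot)
  (Conjf (Allf 6 (Impf (Lef (V 6) (V 0)) (Impf (Negf (Eqf (V 6) (V 0))) (Allf 7 (Impf (Lef (V 7) (V 4))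
     (Impf (fbeta 8 (V 4) (V 3) (V 6) (V 7))
       (Conjf (Impf (Conjf (fprime 10 8 (Pt (V 6) Ot)) (fdvd 8 (Pt (V 6) Ot) (V 1)))
                    (fbeta 8 (V 4) (V 3) (Pt (V 6) Ot) (Tt (V 7) (Pt (V 6) Ot))))
              (Impf (Negf (Conjf (fprime 10 8 (Pt (V 6) Ot)) (fdvd 8 (Pt (V 6) Ot) (V 1))))
                    (fbeta 8 (V 4) (V 3) (Pt (V 6) Ot) (V 7))))))))))
  (Conjf (Allf 6 (Impf (Lef (V 6) (V 0)) (Allf 7 (Impf (Lef (V 7) (V 4)) (Impf (fbeta 8 (V 4) (V 3) (V 6) (V 7))
       (Conjf (fdvd 8 (V 7) (V 2)) (Allf 9 (Impf (Lef (V 9) (V 7))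
          (Impf (Conjf (fprime 10 8 (V 9)) (fdvd 8 (V 9) (V 7))) (Lef (V 9) (V 6)))))))))))
  (Conjf (Conjf (Lef Zt (V 5)) (Negf (Eqf Zt (V 5))))
  (Conjf (Allf 6 (Impf (Lef (V 6) (V 0)) (fdvd 8 (Pt Ot (Tt (Pt (V 6) Ot) (V 3))) (V 5))))
         (Allf 11 (Impf (Lef (V 11) (V 1)) (Impf (Conjf (Lef (V 0) (V 11)) (Negf (Eqf (V 0) (V 11))))
             (fcop 10 8 (V 5) (Pt Ot (Tt (Pt (V 11) Ot) (V 3)))))))))))"

abbreviation "Psi \<equiv> Exf 4 (Exf 5 (Impf (Lef (V 0) (V 1)) PsiB))"

lemma Psi_sigma1: "sigma1 Psi"
  by (intro sigma1.intros delta0.intros) (auto intro!: delta0.intros)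

lemma sat_Psi:
  assumes C: "N \<in> C" "D \<in> C" "b \<in> C" "i \<in> C" and b0: "Z \<prec> b" and D0: "D \<noteq> Z"
  shows "sat M (((\<lambda>_. Z)(1 := N, 2 := D, 3 := b))(0 := i)) Psi \<longleftrightarrow>
     (\<exists>a\<in>C. \<exists>L\<in>C. i \<preceq> N \<longrightarrow> RCb N D b i a L)"
proof -
  have mo: "\<And>j. j \<in> C \<Longrightarrow> mo b j \<in> C \<and> Z \<prec> mo b j" using mo_pos C b0 by auto
  show ?thesis
    using C b0 mo
    by (simp add: RCb_def lt_def[symmetric] mo_def[symmetric])
qed

end

context isig begin

lemma b_lt_mo: assumes "b \<in> C" "j \<in> C" shows "b \<prec> mo b j"
proof -
  have "U \<preceq> j \<oplus> U" using le_add2[of U j] assms by simp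
  then have "U \<otimes> b \<preceq> (j \<oplus> U) \<otimes> b" using mul_le_mono_r[of U "j \<oplus> U" b] assms by simp
  moreover have "(j \<oplus> U) \<otimes> b \<prec> U \<oplus> (j \<oplus> U) \<otimes> b" using lt_succ[of "(j \<oplus> U) \<otimes> b"] add_comm[of "(j \<oplus> U) \<otimes> b" U] assms by simp
  ultimately show ?thesis unfolding mo_def using assms le_lt_trans[of b "(j \<oplus> U) \<otimes> b"] by simp
qed

lemma rinv_step:
  assumes C: "D \<in> C" "N \<in> C" "i \<in> C" "u \<in> C" and D0: "D \<noteq> Z"
    and H: "\<forall>p\<in>C. prime_in M p \<and> dvd_in M p N \<longrightarrow> dvd_in M p D"
    and inv: "rinv D i u"
  shows "rinv D (i \<oplus> U) (if prime_in M (i \<oplus> U) \<and> dvd_in M (i \<oplus> U) N then u \<otimes> (i \<oplus> U) else u)"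
proof (cases "prime_in M (i \<oplus> U) \<and> dvd_in M (i \<oplus> U) N")
  case False
  have "i \<preceq> i \<oplus> U" using le_add[of i U] C by simp
  then show ?thesis using False inv C le_trans[of _ i "i \<oplus> U"] unfolding rinv_def by auto
next
  case True
  let ?p = "i \<oplus> U"
  have pC: "?p \<in> C" using C by simp
  have pD: "dvd_in M ?p D" using H True pC by blast
  have npu: "\<not> dvd_in M ?p u"
  proof
    assume "dvd_in M ?p u"
    then have "?p \<preceq> i" using inv True pC unfolding rinv_def by blast
    then show False using lt_succ[of i] not_le[of ?p i] C by simp
  qed
  obtain h where h: "h \<in> C" "D = u \<otimes> h" using inv unfolding rinv_def dvd_in_def by blast
  have "dvd_in M ?p h" using euclid[of ?p u h] True pC C h pD npu by simp
  then obtain h' where h': "h' \<in> C" "h = ?p \<otimes> h'" unfolding dvd_in_def by blast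
  have "D = (u \<otimes> ?p) \<otimes> h'" using h h' C mul_assoc[of u ?p h'] by simp
  then have 1: "dvd_in M (u \<otimes> ?p) D" unfolding dvd_in_def using h' by blast
  have 2: "p \<preceq> ?p" if p: "p \<in> C" "prime_in M p" "dvd_in M p (u \<otimes> ?p)" for p
  proof (cases "dvd_in M p u")
    case True
    then have "p \<preceq> i" using inv p unfolding rinv_def by blast
    then show ?thesis using le_trans[of p i ?p] le_add[of i U] p C by simp
  next
    case False
    then have "dvd_in M p ?p" using euclid[of p u ?p] p C by simp
    moreover have "?p \<noteq> Z" using lt_succ[of i] Z_le[of i] le_lt_trans[of Z i ?p] C by auto
    ultimately show ?thesis using dvd_le[of p ?p] p C by simp
  qed
  show ?thesis using True 1 2 unfolding rinv_def by auto
qed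

lemma RC_base:
  assumes C: "N \<in> C" "D \<in> C" "b \<in> C" and b0: "Z \<prec> b" and dv: "divall b N"
  shows "RC N D b Z U (mo b Z)"
proof -
  have m: "mo b Z \<in> C" "U \<prec> mo b Z" "Z \<prec> mo b Z" using mo_gt1[of b Z] mo_pos[of b Z] C b0 by auto
  have u: "md U (mo b Z) = U" using md_small[of "mo b Z" U] m by simp
  have jZ: "j = Z" if "j \<in> C" "j \<preceq> Z" for j using le_antisym[of j Z] that by simp
  have "rinv D Z U" unfolding rinv_def using C dvd_U lt_irrefl prime_C_gt by fastforce
  moreover have "\<forall>k\<in>C. k \<preceq> N \<longrightarrow> Z \<prec> k \<longrightarrow> coprime_in M (mo b Z) (mo b k)"
    using mo_coprime[of b N Z] C b0 dv by simp
  moreover have "\<forall>j\<in>C. j \<preceq> Z \<longrightarrow> rinv D j (md U (mo b j))"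
  proof (intro ballI impI)
    fix j assume "j \<in> C" "j \<preceq> Z" then have "j = Z" by (rule jZ)
    then show "rinv D j (md U (mo b j))" using \<open>rinv D Z U\<close> u by simp
  qed
  moreover have "\<forall>j\<in>C. j \<preceq> Z \<longrightarrow> dvd_in M (mo b j) (mo b Z)"
  proof (intro ballI impI)
    fix j assume "j \<in> C" "j \<preceq> Z" then have "j = Z" by (rule jZ)
    then show "dvd_in M (mo b j) (mo b Z)" using m by simp
  qed
  ultimately show ?thesis unfolding RC_def using u m by (auto dest: jZ)
qed

lemma RC_step:
  assumes C: "N \<in> C" "D \<in> C" "b \<in> C" "i \<in> C" "a \<in> C" "L \<in> C" and b0: "Z \<prec> b" and dv: "divall b N"
    and D0: "D \<noteq> Z" and Db: "D \<preceq> b" and iN: "i \<prec> N"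
    and H: "\<forall>p\<in>C. prime_in M p \<and> dvd_in M p N \<longrightarrow> dvd_in M p D"
    and rc: "RC N D b i a L"
  shows "\<exists>a'\<in>C. \<exists>L'\<in>C. RC N D b (i \<oplus> U) a' L'"
proof -
  have mo: "\<And>j. j \<in> C \<Longrightarrow> mo b j \<in> C \<and> Z \<prec> mo b j" using mo_pos C b0 by auto
  let ?u = "md a (mo b i)"
  let ?c = "prime_in M (i \<oplus> U) \<and> dvd_in M (i \<oplus> U) N"
  define w where "w = (if ?c then ?u \<otimes> (i \<oplus> U) else ?u)"
  have uC: "?u \<in> C" using mo C by simp
  have wC: "w \<in> C" unfolding w_def using uC C by simp
  have invu: "rinv D i ?u" using rc C unfolding RC_def by simp
  have invw: "rinv D (i \<oplus> U) w" unfolding w_def using rinv_step[OF C(2,1,4) uC D0 H invu] .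
  have "w \<noteq> Z" using invw dvd_0_iff[of D] D0 C unfolding rinv_def by auto
  then have "w \<preceq> D" using invw dvd_le[of w D] wC C D0 unfolding rinv_def by simp
  then have wlt: "w \<prec> mo b (i \<oplus> U)" using le_lt_trans[of w D "mo b (i \<oplus> U)"] le_lt_trans[of D b "mo b (i \<oplus> U)"]
      b_lt_mo[of b "i \<oplus> U"] Db wC C by simp
  have L0: "Z \<prec> L" using rc C pos_iff[of L] unfolding RC_def by auto
  have Ldv: "\<forall>j\<in>C. j \<preceq> i \<longrightarrow> dvd_in M (mo b j) L" using rc unfolding RC_def by simp
  have Lcop: "\<forall>k\<in>C. i \<prec> k \<longrightarrow> k \<preceq> N \<longrightarrow> coprime_in M L (mo b k)" using rc unfolding RC_def by blast
  obtain a' where a': "a' \<in> C" "\<forall>j\<in>C. j \<preceq> i \<longrightarrow> md a' (mo b j) = md a (mo b j)" "md a' (mo b (i \<oplus> U)) = w"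
    using ext_code[OF C(3,1,4,5,6) wC b0 iN Ldv Lcop wlt] by blast
  note L' = ext_L[OF C(3,1,4,6) b0 iN dv L0 Ldv Lcop]
  let ?L = "L \<otimes> mo b (i \<oplus> U)"
  have LC: "?L \<in> C" using C mo by simp
  have iZ: "Z \<preceq> i" using C by simp
  have rec: "(prime_in M (j \<oplus> U) \<and> dvd_in M (j \<oplus> U) N \<longrightarrow> md a (mo b j) \<otimes> (j \<oplus> U) = md a (mo b (j \<oplus> U))) \<and>
      (\<not> (prime_in M (j \<oplus> U) \<and> dvd_in M (j \<oplus> U) N) \<longrightarrow> md a (mo b j) = md a (mo b (j \<oplus> U)))"
    if "j \<in> C" "j \<preceq> i" "j \<noteq> i" for j using rc that unfolding RC_def by blast
  have le_cases: "j \<preceq> i \<or> j = i \<oplus> U" if "j \<in> C" "j \<preceq> i \<oplus> U" for j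
    using le_iff[of j "i \<oplus> U"] le_succ_iff[of j i] that C by auto
  have "RC N D b (i \<oplus> U) a' ?L" unfolding RC_def
  proof (intro conjI)
    show "U = md a' (mo b Z)" using a' rc iZ unfolding RC_def by simp
  next
    show "\<forall>j\<in>C. j \<preceq> i \<oplus> U \<longrightarrow> j \<noteq> i \<oplus> U \<longrightarrow>
      (prime_in M (j \<oplus> U) \<and> dvd_in M (j \<oplus> U) N \<longrightarrow> md a' (mo b j) \<otimes> (j \<oplus> U) = md a' (mo b (j \<oplus> U))) \<and>
      (\<not> (prime_in M (j \<oplus> U) \<and> dvd_in M (j \<oplus> U) N) \<longrightarrow> md a' (mo b j) = md a' (mo b (j \<oplus> U)))"
    proof (intro ballI impI)
      fix j assume j: "j \<in> C" "j \<preceq> i \<oplus> U" "j \<noteq> i \<oplus> U"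
      then have ji: "j \<preceq> i" using le_cases by blast
      show "(prime_in M (j \<oplus> U) \<and> dvd_in M (j \<oplus> U) N \<longrightarrow> md a' (mo b j) \<otimes> (j \<oplus> U) = md a' (mo b (j \<oplus> U))) \<and>
      (\<not> (prime_in M (j \<oplus> U) \<and> dvd_in M (j \<oplus> U) N) \<longrightarrow> md a' (mo b j) = md a' (mo b (j \<oplus> U)))"
      proof (cases "j = i")
        case True then show ?thesis using a' w_def C by simp
      next
        case False
        then have "j \<prec> i" using ji le_iff[of j i] j by simp
        then have "j \<oplus> U \<preceq> i" using lt_succ_le[of j i] j C by simp
        moreover have "md a' (mo b j) = md a (mo b j)" using a' j ji by simp
        moreover have "md a' (mo b (j \<oplus> U)) = md a (mo b (j \<oplus> U))" using a'(2) j C calculation(1) by simp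
        ultimately show ?thesis using rec[of j] j ji False by simp
      qed
    qed
  next
    show "\<forall>j\<in>C. j \<preceq> i \<oplus> U \<longrightarrow> rinv D j (md a' (mo b j))"
    proof (intro ballI impI)
      fix j assume j: "j \<in> C" "j \<preceq> i \<oplus> U"
      then consider "j \<preceq> i" | "j = i \<oplus> U" using le_cases by blast
      then show "rinv D j (md a' (mo b j))"
      proof cases
        case 1 then show ?thesis using a' j rc unfolding RC_def by simp
      next
        case 2 then show ?thesis using a' invw by simp
      qed
    qed
  next
    show "Z \<noteq> ?L" using L'(1) by auto
  next
    show "\<forall>j\<in>C. j \<preceq> i \<oplus> U \<longrightarrow> dvd_in M (mo b j) ?L" using L'(2) .
  next
    show "\<forall>k\<in>C. k \<preceq> N \<longrightarrow> i \<oplus> U \<prec> k \<longrightarrow> coprime_in M ?L (mo b k)" using L'(3) by blast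
  qed
  then show ?thesis using a' LC by blast
qed

lemma rad_exists:
  assumes C: "N \<in> C" "D \<in> C" and D0: "D \<noteq> Z"
    and H: "\<forall>p\<in>C. prime_in M p \<and> dvd_in M p N \<longrightarrow> dvd_in M p D"
  shows "\<exists>r\<in>C. rad_in M N r \<and> dvd_in M r D"
proof -
  have "Z \<prec> D" using D0 pos_iff C by blast
  then obtain b where b: "b \<in> C" "Z \<prec> b" "D \<preceq> b" "divall b N" using divall_ex2[of N D] C by blast
  let ?r = "(\<lambda>_. Z)(1 := N, 2 := D, 3 := b)"
  let ?Q = "\<lambda>i. \<exists>a\<in>C. \<exists>L\<in>C. i \<preceq> N \<longrightarrow> RCb N D b i a L"
  have rr: "range ?r \<subseteq> C" using C b by auto
  have sat: "\<And>i. i \<in> C \<Longrightarrow> sat M (?r(0 := i)) Psi = ?Q i" using sat_Psi C b D0 by blast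
  have "RC N D b Z U (mo b Z)" using RC_base[of N D b] C b by simp
  then have "RCb N D b Z U (mo b Z)" using RCb_iff[of N D b Z U "mo b Z"] C b D0 by simp
  then have base: "?Q Z" using C b by (intro bexI[of _ U] bexI[of _ "mo b Z"]) auto
  have step: "?Q (i \<oplus> U)" if i: "i \<in> C" "?Q i" for i
  proof (cases "i \<oplus> U \<preceq> N")
    case True
    then have iN: "i \<prec> N" using lt_succ_le[of i N] i C by simp
    then have "i \<preceq> N" using lt_imp_le by blast
    then obtain a L where aL: "a \<in> C" "L \<in> C" "RCb N D b i a L" using i by blast
    then have "RC N D b i a L" using RCb_iff C b D0 i by blast
    then obtain a' L' where a'L': "a' \<in> C" "L' \<in> C" "RC N D b (i \<oplus> U) a' L'"
      using RC_step[of N D b i a L] C b D0 iN H aL i by blast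
    then have "RCb N D b (i \<oplus> U) a' L'" using RCb_iff[of N D b "i \<oplus> U" a' L'] C b D0 i by simp
    then show ?thesis using a'L' by blast
  next
    case False then show ?thesis by (intro bexI[of _ Z]) auto
  qed
  have "?Q N" by (rule sig_ind[OF Psi_sigma1 rr sat base step C(1)])
  then obtain a L where aL: "a \<in> C" "L \<in> C" "RCb N D b N a L" using C by auto
  then have rc: "RC N D b N a L" using RCb_iff C b D0 by blast
  have mo: "\<And>j. j \<in> C \<Longrightarrow> mo b j \<in> C \<and> Z \<prec> mo b j" using mo_pos C b by auto
  let ?res = "md a (mo b N)"
  have resC: "?res \<in> C" using mo C aL by simp
  have u0: "U = md a (mo b Z)" using rc unfolding RC_def by blast
  have b1: "beta_in M a b Z U" by (rule beta_iff[of a b Z U, THEN iffD2]) (use aL b u0 mo[of Z] in auto)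
  have b3: "beta_in M a b N ?res" using beta_iff[of a b N ?res] aL b C resC by simp
  have b2: "\<forall>i\<in>C. i \<prec> N \<longrightarrow> (\<forall>u\<in>C. beta_in M a b i u \<longrightarrow>
     beta_in M a b (i \<oplus> U) (if prime_in M (i \<oplus> U) \<and> dvd_in M (i \<oplus> U) N then u \<otimes> (i \<oplus> U) else u))"
  proof (intro ballI impI)
    fix i u assume iu: "i \<in> C" "i \<prec> N" "u \<in> C" "beta_in M a b i u"
    then have u: "u = md a (mo b i)" using beta_iff[of a b i u] aL b by simp
    have "i \<preceq> N" "i \<noteq> N" using iu by (auto simp: lt_def)
    then have "(prime_in M (i \<oplus> U) \<and> dvd_in M (i \<oplus> U) N \<longrightarrow> md a (mo b i) \<otimes> (i \<oplus> U) = md a (mo b (i \<oplus> U))) \<and>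
      (\<not> (prime_in M (i \<oplus> U) \<and> dvd_in M (i \<oplus> U) N) \<longrightarrow> md a (mo b i) = md a (mo b (i \<oplus> U)))"
      using rc iu unfolding RC_def by blast
    then show "beta_in M a b (i \<oplus> U) (if prime_in M (i \<oplus> U) \<and> dvd_in M (i \<oplus> U) N then u \<otimes> (i \<oplus> U) else u)"
      using beta_iff[of a b "i \<oplus> U"] u aL b iu mo by auto
  qed
  have "rad_in M N ?res" unfolding rad_in_def using b1 b2 b3 aL b by blast
  moreover have "dvd_in M ?res D" using rc C unfolding RC_def rinv_def by simp
  ultimately show ?thesis using resC by blast
qed

end



fun npw :: "'b lstr \<Rightarrow> 'b \<Rightarrow> nat \<Rightarrow> 'b" where
  "npw M x 0 = one M"
| "npw M x (Suc k) = tm M (npw M x k) x"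

context isig begin

lemma npw_C[simp]: "x \<in> C \<Longrightarrow> npw M x k \<in> C" by (induct k) auto

lemma npw_ge1: "x \<in> C \<Longrightarrow> U \<preceq> x \<Longrightarrow> U \<preceq> npw M x k"
proof (induct k)
  case (Suc k)
  then show ?case using mul_le_mono[of U "npw M x k" U x] by simp
qed simp

lemma npw_mono: "x \<in> C \<Longrightarrow> U \<preceq> x \<Longrightarrow> j \<le> k \<Longrightarrow> npw M x j \<preceq> npw M x k"
proof (induct k)
  case 0 then show ?case by simp
next
  case (Suc k)
  have "npw M x k \<preceq> npw M x (Suc k)" using mul_le_mono_l[of U x "npw M x k"] Suc by simp
  then show ?case using Suc le_trans[of "npw M x j" "npw M x k" "npw M x (Suc k)"]
    by (cases "j = Suc k") auto
qed

lemma pow_exists: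
  assumes x: "x \<in> C" "U \<preceq> x"
  shows "pow_in M x (num M n) (npw M x n)"
proof -
  let ?D = "npw M x n"
  have DC: "?D \<in> C" using x by simp
  have D0: "Z \<prec> ?D" using npw_ge1[OF x, of n] Z_lt_U lt_le_trans[of Z U ?D] DC by simp
  obtain b where b: "b \<in> C" "Z \<prec> b" "?D \<preceq> b" "divall b (num M n)" using divall_ex2[of "num M n" ?D] DC D0 by auto
  have mo: "\<And>j. j \<in> C \<Longrightarrow> mo b j \<in> C \<and> Z \<prec> mo b j" using mo_pos b by auto
  have I: "\<exists>a\<in>C. \<exists>L\<in>C. Z \<prec> L \<and> (\<forall>j\<le>k. md a (mo b (num M j)) = npw M x j) \<and>
     (\<forall>j\<in>C. j \<preceq> num M k \<longrightarrow> dvd_in M (mo b j) L) \<and>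
     (\<forall>k'\<in>C. num M k \<prec> k' \<longrightarrow> k' \<preceq> num M n \<longrightarrow> coprime_in M L (mo b k'))" if "k \<le> n" for k
    using that
  proof (induct k)
    case 0
    have m: "mo b Z \<in> C" "U \<prec> mo b Z" "Z \<prec> mo b Z" using mo_gt1[of b Z] mo_pos[of b Z] b by auto
    have u: "md U (mo b Z) = U" using md_small[of "mo b Z" U] m by simp
    have jZ: "j = Z" if "j \<in> C" "j \<preceq> Z" for j using le_antisym[of j Z] that by simp
    have c: "\<forall>k'\<in>C. Z \<prec> k' \<longrightarrow> k' \<preceq> num M n \<longrightarrow> coprime_in M (mo b Z) (mo b k')"
      using mo_coprime[of b "num M n" Z] b by simp
    have d: "\<forall>j\<in>C. j \<preceq> Z \<longrightarrow> dvd_in M (mo b j) (mo b Z)" using m by (auto dest: jZ)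
    show ?case using u m c d by (intro bexI[of _ U] bexI[of _ "mo b Z"]) auto
  next
    case (Suc k)
    then obtain a L where aL: "a \<in> C" "L \<in> C" "Z \<prec> L" "\<forall>j\<le>k. md a (mo b (num M j)) = npw M x j"
      "\<forall>j\<in>C. j \<preceq> num M k \<longrightarrow> dvd_in M (mo b j) L"
      "\<forall>k'\<in>C. num M k \<prec> k' \<longrightarrow> k' \<preceq> num M n \<longrightarrow> coprime_in M L (mo b k')" by auto
    have iN: "num M k \<prec> num M n" using Suc num_lt by simp
    let ?w = "npw M x (Suc k)"
    have wC: "?w \<in> C" using x by simp
    have "?w \<preceq> ?D" using npw_mono[OF x Suc(2)] .
    then have wlt: "?w \<prec> mo b (num M k \<oplus> U)"
      using le_lt_trans[of ?w ?D "mo b (num M k \<oplus> U)"] le_lt_trans[of ?D b "mo b (num M k \<oplus> U)"]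
      b_lt_mo[of b "num M k \<oplus> U"] b DC wC by simp
    obtain a' where a': "a' \<in> C" "\<forall>j\<in>C. j \<preceq> num M k \<longrightarrow> md a' (mo b j) = md a (mo b j)"
      "md a' (mo b (num M k \<oplus> U)) = ?w"
      using ext_code[of b "num M n" "num M k" a L ?w] b aL iN wC wlt by auto
    note L' = ext_L[of b "num M n" "num M k" L] b aL iN
    have "\<forall>j\<le>Suc k. md a' (mo b (num M j)) = npw M x j"
    proof (intro allI impI)
      fix j assume "j \<le> Suc k"
      then consider "j \<le> k" | "j = Suc k" by linarith
      then show "md a' (mo b (num M j)) = npw M x j"
      proof cases
        case 1 then show ?thesis using a' aL num_le[of j k] by simp
      next
        case 2 then show ?thesis using a' num_Suc by simp
      qed
    qed
    then show ?case using L' a' num_Suc[of k] by (intro bexI[of _ a'] bexI[of _ "L \<otimes> mo b (num M k \<oplus> U)"]) auto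
  qed
  obtain a L where aL: "a \<in> C" "\<forall>j\<le>n. md a (mo b (num M j)) = npw M x j" using I[of n] by auto
  have b1: "beta_in M a b Z U" using beta_iff[of a b Z U] aL(1) b aL(2)[rule_format, of 0] by simp
  have b3: "beta_in M a b (num M n) ?D" using beta_iff[of a b "num M n" ?D] aL b DC by simp
  have b2: "\<forall>i\<in>C. i \<prec> num M n \<longrightarrow> (\<forall>u\<in>C. beta_in M a b i u \<longrightarrow> beta_in M a b (i \<oplus> U) (u \<otimes> x))"
  proof (intro ballI impI)
    fix i u assume iu: "i \<in> C" "i \<prec> num M n" "u \<in> C" "beta_in M a b i u"
    then obtain j where j: "j < n" "i = num M j" using below_num by blast
    then have "u = npw M x j" using iu beta_iff[of a b i u] aL b by simp
    then have "u \<otimes> x = md a (mo b (num M (Suc j)))" using aL j by simp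
    then show "beta_in M a b (i \<oplus> U) (u \<otimes> x)" using beta_iff[of a b "i \<oplus> U" "u \<otimes> x"] j aL b iu x num_Suc mo[of "num M j \<oplus> U"] by simp
  qed
  show ?thesis unfolding pow_in_def using b1 b2 b3 aL b by blast
qed

end



context isig begin

lemma npw_add: "x \<in> C \<Longrightarrow> npw M x (m + n) = npw M x m \<otimes> npw M x n"
  by (induct n) (auto simp: mul_assoc)
lemma npw_mult: "x \<in> C \<Longrightarrow> npw M x (m * n) = npw M (npw M x m) n"
  by (induct n) (auto simp: npw_add mul_comm)
lemma npw_mul_base: "x \<in> C \<Longrightarrow> y \<in> C \<Longrightarrow> npw M (x \<otimes> y) n = npw M x n \<otimes> npw M y n"
proof (induct n)
  case (Suc n)
  then show ?case using mul_assoc[of "npw M x n" "npw M y n" "x \<otimes> y"] mul_left_comm[of "npw M y n" x y]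
    mul_assoc[of "npw M x n" x "npw M y n \<otimes> y"] mul_assoc[of "npw M x n" "npw M y n" "x \<otimes> y"] by simp
qed simp
lemma npw_mono_base: "x \<in> C \<Longrightarrow> y \<in> C \<Longrightarrow> x \<preceq> y \<Longrightarrow> npw M x n \<preceq> npw M y n"
  by (induct n) (auto intro: mul_le_mono)
lemma npw_nz: "x \<in> C \<Longrightarrow> x \<noteq> Z \<Longrightarrow> npw M x n \<noteq> Z"
  by (induct n) (auto simp: mul_eq_0)
lemma npw_strict: assumes "x \<in> C" "y \<in> C" "x \<prec> y" shows "npw M x (Suc n) \<prec> npw M y (Suc n)"
proof (induct n)
  case 0 then show ?case using assms by simp
next
  case (Suc n)
  have y0: "Z \<prec> y" using assms Z_le[of x] le_lt_trans[of Z x y] by simp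
  have 1: "npw M x (Suc n) \<otimes> x \<preceq> npw M x (Suc n) \<otimes> y" using mul_le_mono_l[of x y "npw M x (Suc n)"] assms lt_imp_le by simp
  have 2: "npw M x (Suc n) \<otimes> y \<prec> npw M y (Suc n) \<otimes> y" using mul_lt_mono[OF _ _ _ y0 Suc] assms by simp
  show ?case using le_lt_trans[OF _ _ _ 1 2] assms by simp
qed
lemma npw_2: "z \<in> C \<Longrightarrow> npw M z 2 = z \<otimes> z" by (simp add: numeral_2_eq_2)
lemma npw_3: "z \<in> C \<Longrightarrow> npw M z 3 = z \<otimes> z \<otimes> z" by (simp add: numeral_3_eq_3)
lemma npw_4: "z \<in> C \<Longrightarrow> npw M z 4 = (z \<otimes> z) \<otimes> (z \<otimes> z)"
  using npw_mult[of z 2 2] npw_2[of z] npw_2[of "z \<otimes> z"] by simp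
lemma npw_U[simp]: "npw M U n = U" by (induct n) auto
lemma num_npw: "npw M (num M m) n = num M (m ^ n)"
  by (induct n) (auto simp: num_mul mul_comm)

end

locale expo = isig +
  fixes A e
  assumes ex: "exp_prime M A e"
begin

lemmas EX = ex[unfolded exp_prime_def]
lemmas EX0 = EX[THEN conjunct1]
lemmas EX1 = EX[THEN conjunct2, THEN conjunct1]
lemmas EX2 = EX[THEN conjunct2, THEN conjunct2, THEN conjunct1]
lemmas EX3 = EX[THEN conjunct2, THEN conjunct2, THEN conjunct2, THEN conjunct1]
lemmas EX4 = EX[THEN conjunct2, THEN conjunct2, THEN conjunct2, THEN conjunct2, THEN conjunct1]
lemmas EX5 = EX[THEN conjunct2, THEN conjunct2, THEN conjunct2, THEN conjunct2, THEN conjunct2]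
lemmas PS = EX0[unfolded presburger_sub_def]
lemmas PS0 = PS[THEN conjunct1]
lemmas PS1 = PS[THEN conjunct2, THEN conjunct1]
lemmas PS2 = PS[THEN conjunct2, THEN conjunct2, THEN conjunct1]
lemmas PS3 = PS[THEN conjunct2, THEN conjunct2, THEN conjunct2, THEN conjunct1]
lemmas PS5 = PS[THEN conjunct2, THEN conjunct2, THEN conjunct2, THEN conjunct2, THEN conjunct2, THEN conjunct1]
lemmas PS10 = PS[THEN conjunct2, THEN conjunct2, THEN conjunct2, THEN conjunct2, THEN conjunct2,
   THEN conjunct2, THEN conjunct2, THEN conjunct2, THEN conjunct2, THEN conjunct2, THEN conjunct1]
lemmas PS11 = PS[THEN conjunct2, THEN conjunct2, THEN conjunct2, THEN conjunct2, THEN conjunct2,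
   THEN conjunct2, THEN conjunct2, THEN conjunct2, THEN conjunct2, THEN conjunct2, THEN conjunct2]

lemma A_C: "A \<subseteq> C" using PS0 .
lemma ZA[simp]: "Z \<in> A" using PS1 .
lemma UA[simp]: "U \<in> A" using PS2 .
lemma plA[simp]: "x \<in> A \<Longrightarrow> y \<in> A \<Longrightarrow> x \<oplus> y \<in> A" using PS3 by blast
lemma A_leq: "x \<in> A \<Longrightarrow> y \<in> A \<Longrightarrow> x \<preceq> y \<longleftrightarrow> (\<exists>z\<in>A. x \<oplus> z = y)"
  using PS10 by blast
lemma A_div: "0 < n \<Longrightarrow> x \<in> A \<Longrightarrow> \<exists>y\<in>A. nsm M n y \<preceq> x \<and> x \<prec> nsm M n (y \<oplus> U)"
  using PS11 by blast
lemma A_pred: "x \<in> A \<Longrightarrow> x \<noteq> Z \<Longrightarrow> \<exists>z\<in>A. x = z \<oplus> U"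
  using PS5 by blast

lemma inA: "x \<in> A \<Longrightarrow> x \<in> C" using A_C by blast

lemma e_C[simp]: "x \<in> C \<Longrightarrow> y \<in> A \<Longrightarrow> e x y \<in> C" using EX1 by blast
lemma e_Z[simp]: "x \<in> C \<Longrightarrow> e x Z = U" using EX2 ZA by blast
lemma e_U[simp]: "x \<in> C \<Longrightarrow> e x U = x" using EX4 by blast
lemma e_add: "x \<in> C \<Longrightarrow> y \<in> A \<Longrightarrow> z \<in> A \<Longrightarrow> e x (y \<oplus> z) = e x y \<otimes> e x z"
  using EX5 by blast
lemma e_nz: "x \<in> C \<Longrightarrow> y \<in> A \<Longrightarrow> x \<noteq> Z \<Longrightarrow> e x y \<noteq> Z" using EX3 by blast

lemma numA[simp]: "num M n \<in> A" by (induct n) (auto simp: num_Suc)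
lemma e_num: "x \<in> C \<Longrightarrow> e x (num M n) = npw M x n"
  by (induct n) (auto simp: num_Suc e_add)
lemma nsm_Suc: "y \<in> C \<Longrightarrow> nsm M (Suc n) y = nsm M n y \<oplus> y" by (cases n) auto
lemma nsmA[simp]: "y \<in> A \<Longrightarrow> nsm M n y \<in> A" by (induct n) (auto simp: nsm_Suc inA)
lemma nsm_C[simp]: "y \<in> C \<Longrightarrow> nsm M n y \<in> C" by (induct n) (auto simp: nsm_Suc)
lemma e_nsm: "x \<in> C \<Longrightarrow> y \<in> A \<Longrightarrow> e x (nsm M n y) = npw M (e x y) n"
  by (induct n) (auto simp: e_add inA nsm_Suc)
lemma nsm_num: "y \<in> C \<Longrightarrow> nsm M n y = num M n \<otimes> y"
  by (induct n) (auto simp: num_Suc distR nsm_Suc)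
lemma e_ge1: "x \<in> C \<Longrightarrow> y \<in> A \<Longrightarrow> x \<noteq> Z \<Longrightarrow> U \<preceq> e x y"
  using e_nz[of x y] pos_ge1[of "e x y"] pos_iff[of "e x y"] by simp

end

context expo begin

lemma std_case:
  assumes cat: "catalan_in M" and C: "x \<in> C" "y \<in> C" and gt: "U \<prec> x" "U \<prec> y" "U \<prec> num M ja" "U \<prec> num M jb"
    and eq: "e x (num M ja) = e y (num M jb) \<oplus> U"
  shows "x = num M 3 \<and> num M ja = num M 2 \<and> y = num M 2 \<and> num M jb = num M 3"
proof -
  have px: "pow_in M x (num M ja) (npw M x ja)" using pow_exists[of x ja] C gt lt_imp_le by blast
  have py: "pow_in M y (num M jb) (npw M y jb)" using pow_exists[of y jb] C gt lt_imp_le by blast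
  have "npw M x ja = npw M y jb \<oplus> U" using eq e_num C by simp
  then show ?thesis using cat px py C gt unfolding catalan_in_def by (meson npw_C num_C)
qed

lemma numeral_small:
  assumes a: "a \<in> A" and x: "x \<in> C" "num M 2 \<preceq> x" and lt: "e x a \<prec> num M T"
  shows "\<exists>j. a = num M j"
proof (cases "a \<prec> num M T")
  case True then show ?thesis using below_num inA a by blast
next
  case False
  then have "num M T \<preceq> a" using not_lt inA a by simp
  then obtain z where z: "z \<in> A" "num M T \<oplus> z = a" using A_leq[of "num M T" a] a by auto
  have x0: "x \<noteq> Z" using x Z_lt_U num_lt[of 0 2] lt_le_trans[of Z "num M 2" x] by auto
  have "e x a = npw M x T \<otimes> e x z" using z e_add[of x "num M T" z] e_num x by simp
  moreover have "npw M x T \<preceq> npw M x T \<otimes> e x z"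
    using mul_le_mono_l[of U "e x z" "npw M x T"] e_ge1[of x z] x0 x z inA by simp
  moreover have "npw M (num M 2) T \<preceq> npw M x T" using npw_mono_base[of "num M 2" x T] x by simp
  moreover have "num M T \<preceq> num M (2 ^ T)" using num_le by simp
  ultimately have "num M T \<preceq> e x a" using num_npw[of 2 T] x z inA
    le_trans[of "num M T" "num M (2 ^ T)" "npw M x T"] le_trans[of "num M T" "npw M x T" "e x a"] by simp
  then show ?thesis using lt not_le[of "num M T" "e x a"] x a by simp
qed

lemma div12:
  assumes a: "a \<in> A"
  shows "\<exists>q\<in>A. \<exists>j<12. a = nsm M 12 q \<oplus> num M j"
proof -
  obtain q where q: "q \<in> A" "nsm M 12 q \<preceq> a" "a \<prec> nsm M 12 (q \<oplus> U)" using A_div[of 12 a] a by auto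
  obtain z where z: "z \<in> A" "nsm M 12 q \<oplus> z = a" using A_leq[of "nsm M 12 q" a] q a by auto
  have qC: "q \<in> C" "z \<in> C" using q z inA by auto
  have "nsm M 12 (q \<oplus> U) = nsm M 12 q \<oplus> num M 12" using nsm_num[of q] nsm_num[of "q \<oplus> U"] qC
    distL[of "num M 12" q U] by simp
  then have "z \<prec> num M 12" using q z qC add_lt_mono_iff2[of z "num M 12" "nsm M 12 q"] by simp
  then obtain j where "j < 12" "z = num M j" using below_num qC by blast
  then show ?thesis using q z by blast
qed

lemma prime_dvd_npw: assumes "p \<in> C" "prime_in M p" "z \<in> C" "dvd_in M p (npw M z k)" shows "dvd_in M p z"
  using assms(4)
proof (induct k)
  case 0 then show ?case using dvd_U[of p] assms prime_C_gt by fastforce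
next
  case (Suc k)
  then show ?case using euclid[of p "npw M z k" z] assms by auto
qed

lemma pow12_bound:
  assumes x: "x \<in> C" "U \<prec> x" and q: "q \<in> A" and aa: "U \<prec> nsm M 12 q \<oplus> num M ja"
  shows "npw M (e x q \<otimes> x) 12 \<preceq> npw M (npw M (e x q) 12 \<otimes> npw M x ja) (if q = Z then 6 else 2)"
proof -
  let ?X = "e x q"
  let ?w = "npw M ?X 12 \<otimes> npw M x ja"
  have xC: "x \<noteq> Z" using x Z_lt_U lt_asym[of x U] x lt_1_iff by auto
  have X1: "U \<preceq> ?X" using e_ge1[of x q] x xC q by simp
  have x1: "U \<preceq> x" using x lt_imp_le by blast
  have XC: "?X \<in> C" using x q by simp
  show ?thesis
  proof (cases "q = Z")
    case True
    then have a: "U \<prec> num M ja" using aa nsm_num[of Z] by simp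
    then have "2 \<le> ja" using num_lt[of 1 ja] by simp
    then have "npw M x 2 \<preceq> npw M x ja" using npw_mono[of x 2 ja] x1 x by simp
    moreover have "?w = npw M x ja" using True x by simp
    moreover have "npw M (npw M x 2) 6 = npw M x 12" using npw_mult[of x 2 6] x by simp
    ultimately have "npw M x 12 \<preceq> npw M ?w 6" using npw_mono_base[of "npw M x 2" "npw M x ja" 6] x by simp
    then show ?thesis using True x by simp
  next
    case False
    then obtain q0 where q0: "q0 \<in> A" "q = q0 \<oplus> U" using A_pred q by blast
    have "?X = e x q0 \<otimes> x" using q0 e_add[of x q0 U] x by simp
    moreover have "U \<preceq> e x q0" using e_ge1[of x q0] x xC q0 by simp
    ultimately have "x \<preceq> ?X" using mul_le_mono_r[of U "e x q0" x] x q0 inA by simp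
    then have "?X \<otimes> x \<preceq> ?X \<otimes> ?X" using mul_le_mono_l[of x ?X ?X] x XC by simp
    then have "npw M (?X \<otimes> x) 12 \<preceq> npw M (?X \<otimes> ?X) 12" using npw_mono_base x XC by simp
    moreover have "npw M (?X \<otimes> ?X) 12 = npw M (npw M ?X 12) 2" using npw_mul_base[of ?X ?X 12] npw_2[of "npw M ?X 12"] XC by simp
    moreover have "npw M ?X 12 \<preceq> ?w" using le_mul[of "npw M ?X 12" "npw M x ja"] npw_ge1[of x ja] x1 x XC
      Z_lt_U lt_le_trans[of Z U "npw M x ja"] by simp
    then have "npw M (npw M ?X 12) 2 \<preceq> npw M ?w 2" using npw_mono_base x XC by simp
    ultimately have "npw M (?X \<otimes> x) 12 \<preceq> npw M ?w 2"
      using le_trans[of "npw M (?X \<otimes> x) 12" "npw M (npw M ?X 12) 2" "npw M ?w 2"] x XC by simp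
    then show ?thesis using False by simp
  qed
qed

end

context expo begin

lemma npw_strict3: "x \<in> C \<Longrightarrow> y \<in> C \<Longrightarrow> x \<prec> y \<Longrightarrow> npw M x 3 \<prec> npw M y 3"
  using npw_strict[of x y 2] by (simp add: numeral_3_eq_3)

lemma abc_bound:
  assumes abc: "abc_in M K" and x: "x \<in> C" "U \<prec> x" and y: "y \<in> C" "U \<prec> y" and q: "q \<in> A" "q' \<in> A"
    and aa: "U \<prec> nsm M 12 q \<oplus> num M ja" and bb: "U \<prec> nsm M 12 q' \<oplus> num M jb"
    and eq: "e x (nsm M 12 q \<oplus> num M ja) = e y (nsm M 12 q' \<oplus> num M jb) \<oplus> U"
    and nz: "\<not> (q = Z \<and> q' = Z)"
  shows "e x (nsm M 12 q \<oplus> num M ja) \<prec> num M (K ^ 9)"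
proof -
  define X where "X = e x q"
  define Y where "Y = e y q'"
  define u where "u = e x (nsm M 12 q \<oplus> num M ja)"
  define v where "v = e y (nsm M 12 q' \<oplus> num M jb)"
  have qC: "q \<in> C" "q' \<in> C" using q inA by auto
  have XC: "X \<in> C" "Y \<in> C" unfolding X_def Y_def using x y q by auto
  have uC: "u \<in> C" "v \<in> C" unfolding u_def v_def using x y q by auto
  have hu: "u = npw M X 12 \<otimes> npw M x ja" unfolding u_def X_def using e_add e_nsm e_num x q by simp
  have hv: "v = npw M Y 12 \<otimes> npw M y jb" unfolding v_def Y_def using e_add e_nsm e_num y q by simp
  have uv: "u = v \<oplus> U" using eq unfolding u_def v_def .
  have x0: "x \<noteq> Z" "y \<noteq> Z" using x y lt_1_iff[of x] lt_1_iff[of y] lt_asym[of x U] lt_asym[of y U] by auto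
  have X0: "X \<noteq> Z" "Y \<noteq> Z" unfolding X_def Y_def using e_nz x y q x0 by auto
  have v0: "v \<noteq> Z" unfolding v_def using e_nz x0 y q by simp
  define D where "D = (X \<otimes> x) \<otimes> (Y \<otimes> y)"
  have DC: "D \<in> C" unfolding D_def using XC x y by simp
  have D0: "D \<noteq> Z" unfolding D_def using mul_eq_0 XC x y X0 x0 by simp
  define N where "N = (v \<otimes> U) \<otimes> u"
  have NC: "N \<in> C" unfolding N_def using uC by simp
  have H: "\<forall>p\<in>C. prime_in M p \<and> dvd_in M p N \<longrightarrow> dvd_in M p D"
  proof (intro ballI impI)
    fix p assume p: "p \<in> C" "prime_in M p \<and> dvd_in M p N"
    have dv: "dvd_in M p v \<or> dvd_in M p u" using euclid[of p v u] p uC unfolding N_def by auto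
    show "dvd_in M p D"
    proof (cases "dvd_in M p v")
      case True
      then have "dvd_in M p (npw M Y 12) \<or> dvd_in M p (npw M y jb)"
        using euclid[of p "npw M Y 12" "npw M y jb"] p hv XC y by auto
      then have "dvd_in M p Y \<or> dvd_in M p y" using prime_dvd_npw[of p] p XC y by blast
      then have "dvd_in M p (Y \<otimes> y)" using dvd_mul[of p Y y] dvd_mul2[of p y Y] p XC y by auto
      then show ?thesis unfolding D_def using dvd_mul2[of p "Y \<otimes> y" "X \<otimes> x"] p XC x y by simp
    next
      case False
      then have "dvd_in M p u" using dv by blast
      then have "dvd_in M p (npw M X 12) \<or> dvd_in M p (npw M x ja)"
        using euclid[of p "npw M X 12" "npw M x ja"] p hu XC x by auto
      then have "dvd_in M p X \<or> dvd_in M p x" using prime_dvd_npw[of p] p XC x by blast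
      then have "dvd_in M p (X \<otimes> x)" using dvd_mul[of p X x] dvd_mul2[of p x X] p XC x by auto
      then show ?thesis unfolding D_def using dvd_mul[of p "X \<otimes> x" "Y \<otimes> y"] p XC x y by simp
    qed
  qed
  obtain r where r: "r \<in> C" "rad_in M N r" "dvd_in M r D" using rad_exists[OF NC DC D0 H] by blast
  have rD: "r \<preceq> D" using dvd_le[of r D] r DC D0 by simp
  have cop1: "coprime_in M v U" using coprime_U uC by simp
  have cop2: "coprime_in M U u" unfolding coprime_in_def using dvd_U by blast
  have cop3: "coprime_in M v u" unfolding coprime_in_def
  proof (intro ballI impI)
    fix d assume d: "d \<in> C" "dvd_in M d v \<and> dvd_in M d u"
    then have "dvd_in M d U" using dvd_sub[of d v U] uv uC by simp
    then show "d = U" using dvd_U d by blast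
  qed
  have vpos: "Z \<prec> v" using v0 pos_iff uC by simp
  let ?k = "num M K"
  have abc': "\<forall>a\<in>C. \<forall>b\<in>C. \<forall>c\<in>C. \<forall>r\<in>C.
       Z \<prec> a \<and> Z \<prec> b \<and> coprime_in M a b \<and> coprime_in M b c \<and> coprime_in M a c \<and>
       a \<oplus> b = c \<and> rad_in M ((a \<otimes> b) \<otimes> c) r \<longrightarrow>
       (c \<otimes> c) \<otimes> c \<prec> ((?k \<otimes> ?k) \<otimes> ?k) \<otimes> ((r \<otimes> r) \<otimes> (r \<otimes> r))"
    using abc unfolding abc_in_def Let_def .
  have prem: "Z \<prec> v \<and> Z \<prec> U \<and> coprime_in M v U \<and> coprime_in M U u \<and> coprime_in M v u \<and>
       v \<oplus> U = u \<and> rad_in M ((v \<otimes> U) \<otimes> u) r"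
    using vpos cop1 cop2 cop3 uv r unfolding N_def by simp
  have "u \<otimes> u \<otimes> u \<prec> ?k \<otimes> ?k \<otimes> ?k \<otimes> (r \<otimes> r \<otimes> (r \<otimes> r))"
    using abc'[rule_format, OF uC(2) U_C uC(1) r(1) prem] .
  then have h1: "npw M u 3 \<prec> npw M ?k 3 \<otimes> npw M r 4" using npw_3 npw_4 uC r by simp
  have "npw M r 4 \<preceq> npw M D 4" using npw_mono_base[of r D 4] r DC rD by simp
  then have "npw M ?k 3 \<otimes> npw M r 4 \<preceq> npw M ?k 3 \<otimes> npw M D 4" using mul_le_mono_l r DC by simp
  then have h2: "npw M u 3 \<prec> npw M ?k 3 \<otimes> npw M D 4"
    using h1 lt_le_trans[of "npw M u 3" "npw M ?k 3 \<otimes> npw M r 4" "npw M ?k 3 \<otimes> npw M D 4"] uC r DC by simp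
  have h3: "npw M u 9 \<prec> npw M ?k 9 \<otimes> npw M D 12"
    using npw_strict3[OF _ _ h2] npw_mult[of u 3 3] npw_mul_base[of "npw M ?k 3" "npw M D 4" 3]
      npw_mult[of ?k 3 3] npw_mult[of D 4 3] uC DC by simp
  have b1: "npw M (X \<otimes> x) 12 \<preceq> npw M u (if q = Z then 6 else 2)"
    using pow12_bound[OF x q(1) aa] hu unfolding X_def by simp
  have b2': "npw M (Y \<otimes> y) 12 \<preceq> npw M v (if q' = Z then 6 else 2)"
    using pow12_bound[OF y q(2) bb] hv unfolding Y_def by simp
  have vu: "v \<preceq> u" using uv le_add uC by simp
  have b2: "npw M (Y \<otimes> y) 12 \<preceq> npw M u (if q' = Z then 6 else 2)"
    using b2' npw_mono_base[OF _ _ vu, of "if q' = Z then 6 else 2"]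
      le_trans[of "npw M (Y \<otimes> y) 12" "npw M v (if q' = Z then 6 else 2)" "npw M u (if q' = Z then 6 else 2)"] uC XC y
    by simp
  have u1: "U \<preceq> u" using uv le_add2 uC by simp
  define e1 where "e1 = (if q = Z then 6 else (2::nat))"
  define e2 where "e2 = (if q' = Z then 6 else (2::nat))"
  have e12: "e1 + e2 \<le> 8" unfolding e1_def e2_def using nz by auto
  have c1: "npw M D 12 = npw M (X \<otimes> x) 12 \<otimes> npw M (Y \<otimes> y) 12" unfolding D_def using npw_mul_base XC x y by simp
  have c2: "npw M (X \<otimes> x) 12 \<otimes> npw M (Y \<otimes> y) 12 \<preceq> npw M u e1 \<otimes> npw M u e2"
    using mul_le_mono[OF _ _ _ _ b1 b2] uC XC x y unfolding e1_def e2_def by simp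
  have c3: "npw M u e1 \<otimes> npw M u e2 = npw M u (e1 + e2)" using npw_add uC by simp
  have c4: "npw M u (e1 + e2) \<preceq> npw M u 8" using npw_mono[OF uC(1) u1 e12] .
  have D12: "npw M D 12 \<preceq> npw M u 8"
    using c1 c2 c3 c4 le_trans[of "npw M D 12" "npw M u (e1 + e2)" "npw M u 8"] uC DC XC x y by simp
  have "npw M ?k 9 \<otimes> npw M D 12 \<preceq> npw M ?k 9 \<otimes> npw M u 8" using mul_le_mono_l[OF _ _ _ D12] uC DC by simp
  then have "npw M u 9 \<prec> npw M ?k 9 \<otimes> npw M u 8"
    using h3 lt_le_trans[of "npw M u 9" "npw M ?k 9 \<otimes> npw M D 12" "npw M ?k 9 \<otimes> npw M u 8"] uC DC by simp
  moreover have "npw M u 9 = u \<otimes> npw M u 8" using npw_add[of u 8 1] uC mul_comm[of "npw M u 8" u] by simp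
  moreover have "Z \<prec> npw M u 8" using npw_nz[of u 8] uC u1 pos_iff lt_le_trans[of Z U u] Z_lt_U by auto
  ultimately have "u \<prec> npw M ?k 9" using mul_lt_mono_iff[of u "npw M ?k 9" "npw M u 8"] uC by simp
  then show ?thesis unfolding u_def using num_npw by simp
qed

end

context expo begin

lemma main_expo:
  assumes abcK: "abc_in M K" and cat: "catalan_in M"
    and xy: "x \<in> C" "y \<in> C" and ab: "a \<in> A" "b \<in> A"
    and gt: "U \<prec> x" "U \<prec> y" "U \<prec> a" "U \<prec> b"
    and eq: "e x a = e y b \<oplus> U"
  shows "x = num M 3 \<and> a = num M 2 \<and> y = num M 2 \<and> b = num M 3"
proof -
  have std: ?thesis if "a = num M ja" "b = num M jb" for ja jb
    using std_case[OF cat xy, of ja jb] that gt eq by simp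
  obtain q ja where q: "q \<in> A" "ja < 12" "a = nsm M 12 q \<oplus> num M ja" using div12 ab by blast
  obtain q' jb where q': "q' \<in> A" "jb < 12" "b = nsm M 12 q' \<oplus> num M jb" using div12 ab by blast
  have nZ: "nsm M 12 Z = Z" using nsm_num[of Z] by simp
  show ?thesis
  proof (cases "q = Z \<and> q' = Z")
    case True
    then show ?thesis using std[of ja jb] q q' nZ by simp
  next
    case False
    have "e x (nsm M 12 q \<oplus> num M ja) \<prec> num M (K ^ 9)"
      using abc_bound[OF abcK xy(1) gt(1) xy(2) gt(2) q(1) q'(1), of ja jb] q q' gt eq False by simp
    then have ua: "e x a \<prec> num M (K ^ 9)" using q by simp
    have two: "num M 2 = U \<oplus> U" using num_Suc[of 1] by (simp add: numeral_2_eq_2)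
    have x2: "num M 2 \<preceq> x" using gt lt_succ_le[of U x] xy two by simp
    have y2: "num M 2 \<preceq> y" using gt lt_succ_le[of U y] xy two by simp
    obtain j1 where j1: "a = num M j1" using numeral_small[OF ab(1) xy(1) x2 ua] by blast
    have "e y b \<prec> e x a" using eq lt_succ[of "e y b"] xy ab by simp
    then have "e y b \<prec> num M (K ^ 9)" using ua lt_trans[of "e y b" "e x a" "num M (K ^ 9)"] xy ab by simp
    then obtain j2 where j2: "b = num M j2" using numeral_small[OF ab(2) xy(2) y2] by blast
    show ?thesis using std[OF j1 j2] .
  qed
qed

end

theorem proposition5p4:
  fixes S :: "fm set" and B :: "'b lstr" and A :: "'b set" and e :: "'b \<Rightarrow> 'b \<Rightarrow> 'b"
  assumes theory_S: "\<forall>p\<in>S. sentence p"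
    and extends: "\<forall>M :: 'b lstr. models S M \<longrightarrow> model_ISigma1 M"
    and abc: "\<exists>K::nat. \<forall>M :: 'b lstr. models S M \<longrightarrow> abc_in M K"
    and catalan: "\<forall>M :: 'b lstr. models S M \<longrightarrow> catalan_in M"
    and modelB: "models S B"
    and expB: "exp_prime B A e"
  shows "\<forall>x\<in>car B. \<forall>y\<in>car B. \<forall>a\<in>A. \<forall>b\<in>A.
           lt B (one B) x \<and> lt B (one B) y \<and> lt B (one B) a \<and> lt B (one B) b \<and>
           e x a = pl B (e y b) (one B) \<longrightarrow>
           x = num B 3 \<and> a = num B 2 \<and> y = num B 2 \<and> b = num B 3"
proof (intro ballI impI)
  fix x y a b
  assume xy: "x \<in> car B" "y \<in> car B" and ab: "a \<in> A" "b \<in> A"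
    and h: "lt B (one B) x \<and> lt B (one B) y \<and> lt B (one B) a \<and> lt B (one B) b \<and> e x a = pl B (e y b) (one B)"
  have mI: "model_ISigma1 B" using extends modelB by blast
  have E: "expo B A e" by (rule expo.intro[OF isig.intro[OF mI] expo_axioms.intro[OF expB]])
  obtain K where K: "abc_in B K" using abc modelB by blast
  have cat: "catalan_in B" using catalan modelB by blast
  show "x = num B 3 \<and> a = num B 2 \<and> y = num B 2 \<and> b = num B 3"
    using expo.main_expo[OF E K cat xy ab] h by blast
qed


end
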